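(* There is an absolute constant $C>0$ such that for every $n\ge 2$ and every Boolean function $f:\{0,1\}^n\times\{0,1\}^n\to\{0,1\}$, $$Q^{\parallel}(f)\le C\cdot 2^{R^{\parallel,pub}(f)}\log n .$$
   Context: All protocols compute $f$ with error probability at most $1/3$ on every input. $Q^{\parallel}(f)$ is the minimal total number of qubits communicated in a quantum simultaneous-message-passing (SMP) protocol for $f$ with no shared randomness and no shared entanglement: Alice (holding $x$) and Bob (holding $y$) each send one quantum message to a referee who holds no input and outputs the answer. $R^{\parallel,pub}(f)$ is the minimal total number of bits communicated in a classical SMP protocol for $f$ in which Alice and Bob share an unlimited amount of public randomness (not counted in the cost); the referee does not see the shared randomness except through the messages. *)

theory Defs
  imports "Jordan_Normal_Form.Conjugate" "Jordan_Normal_Form.Matrix"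
    "HOL-Probability.Probability_Mass_Function"
begin

definition mtrace :: "complex mat \<Rightarrow> complex" where
  "mtrace A = (\<Sum>i<dim_row A. A $$ (i, i))"

definition hermitian_mat :: "nat \<Rightarrow> complex mat \<Rightarrow> bool" where
  "hermitian_mat d A \<longleftrightarrow> A \<in> carrier_mat d d \<and>
     (\<forall>i<d. \<forall>j<d. A $$ (i, j) = cnj (A $$ (j, i)))"

definition psd_mat :: "nat \<Rightarrow> complex mat \<Rightarrow> bool" where
  "psd_mat d A \<longleftrightarrow> hermitian_mat d A \<and>
     (\<forall>v \<in> carrier_vec d. Re (conjugate v \<bullet> (A *\<^sub>v v)) \<ge> 0)"

definition density_op :: "nat \<Rightarrow> complex mat \<Rightarrow> bool" where
  "density_op d \<rho> \<longleftrightarrow> psd_mat d \<rho> \<and> mtrace \<rho> = 1"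

text \<open>Element M of a two-outcome POVM {M, I - M}: 0 <= M <= I.\<close>
definition povm_elem :: "nat \<Rightarrow> complex mat \<Rightarrow> bool" where
  "povm_elem d M \<longleftrightarrow> psd_mat d M \<and> psd_mat d (1\<^sub>m d - M)"

definition kron :: "complex mat \<Rightarrow> complex mat \<Rightarrow> complex mat" where
  "kron A B = Matrix.mat (dim_row A * dim_row B) (dim_col A * dim_col B)
     (\<lambda>(i, j). A $$ (i div dim_row B, j div dim_col B) * B $$ (i mod dim_row B, j mod dim_col B))"

text \<open>Alice sends a qa-qubit state rho x
  (a density operator on dimension 2^qa), Bob a qb-qubit state sigma y; the referee performs
  a two-outcome measurement {M, I - M} on the product state rho x (x) sigma y and outputs 1
  with probability Re (tr (M (rho x (x) sigma y))).\<close>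
definition quantum_smp_protocol ::
  "nat \<Rightarrow> (bool list \<Rightarrow> bool list \<Rightarrow> bool) \<Rightarrow> nat \<Rightarrow> nat \<Rightarrow>
   (bool list \<Rightarrow> complex mat) \<Rightarrow> (bool list \<Rightarrow> complex mat) \<Rightarrow> complex mat \<Rightarrow> bool" where
  "quantum_smp_protocol n f qa qb \<rho> \<sigma> M \<longleftrightarrow>
     (\<forall>x. length x = n \<longrightarrow> density_op (2 ^ qa) (\<rho> x)) \<and>
     (\<forall>y. length y = n \<longrightarrow> density_op (2 ^ qb) (\<sigma> y)) \<and>
     povm_elem (2 ^ (qa + qb)) M \<and>
     (\<forall>x y. length x = n \<longrightarrow> length y = n \<longrightarrow>
        (let p1 = Re (mtrace (M * kron (\<rho> x) (\<sigma> y))) in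
         (if f x y then p1 else 1 - p1) \<ge> 2 / 3))"

definition Q_smp :: "nat \<Rightarrow> (bool list \<Rightarrow> bool list \<Rightarrow> bool) \<Rightarrow> nat" where
  "Q_smp n f = (LEAST q. \<exists>qa qb \<rho> \<sigma> M. qa + qb = q \<and> quantum_smp_protocol n f qa qb \<rho> \<sigma> M)"

text \<open>Public randomness is a random seed r drawn from an (arbitrary discrete) distribution R;
  Alice sends the ca-bit string A x r, Bob the cb-bit string B y r; the referee, who does not
  see r, outputs according to (possibly privately randomized) g on the two messages.\<close>
definition pub_smp_protocol ::
  "nat \<Rightarrow> (bool list \<Rightarrow> bool list \<Rightarrow> bool) \<Rightarrow> nat \<Rightarrow> nat \<Rightarrow> nat pmf \<Rightarrow>
   (bool list \<Rightarrow> nat \<Rightarrow> bool list) \<Rightarrow> (bool list \<Rightarrow> nat \<Rightarrow> bool list) \<Rightarrow>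
   (bool list \<Rightarrow> bool list \<Rightarrow> bool pmf) \<Rightarrow> bool" where
  "pub_smp_protocol n f ca cb R A B g \<longleftrightarrow>
     (\<forall>x r. length x = n \<longrightarrow> length (A x r) = ca) \<and>
     (\<forall>y r. length y = n \<longrightarrow> length (B y r) = cb) \<and>
     (\<forall>x y. length x = n \<longrightarrow> length y = n \<longrightarrow>
        measure_pmf.prob (bind_pmf R (\<lambda>r. g (A x r) (B y r))) {f x y} \<ge> 2 / 3)"

definition R_smp_pub :: "nat \<Rightarrow> (bool list \<Rightarrow> bool list \<Rightarrow> bool) \<Rightarrow> nat" where
  "R_smp_pub n f = (LEAST c. \<exists>ca cb R A B g. ca + cb = c \<and> pub_smp_protocol n f ca cb R A B g)"

end

theory Submission
  imports Defs "HOL-Probability.Hoeffding"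
begin

definition rmat :: "nat \<Rightarrow> (nat \<Rightarrow> nat \<Rightarrow> real) \<Rightarrow> complex mat" where
  "rmat d F = Matrix.mat d d (\<lambda>(i, j). complex_of_real (F i j))"

lemma rmat_carrier[simp]: "rmat d F \<in> carrier_mat d d"
  by (simp add: rmat_def)

lemma rmat_dims[simp]: "dim_row (rmat d F) = d" "dim_col (rmat d F) = d"
  by (simp_all add: rmat_def)

lemma rmat_index[simp]: "i < d \<Longrightarrow> j < d \<Longrightarrow> rmat d F $$ (i, j) = complex_of_real (F i j)"
  by (simp add: rmat_def)

lemma conj_complex: "conjugate (z::complex) = cnj z"
  by (simp add: conjugate_complex_def)

lemma qform_rmat:
  assumes "v \<in> carrier_vec d"
  shows "conjugate v \<bullet> (rmat d F *\<^sub>v v) = (\<Sum>i<d. cnj (v $ i) * (\<Sum>j<d. complex_of_real (F i j) * v $ j))"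
  using assms by (simp add: scalar_prod_def conj_complex atLeast0LessThan)

lemma hermitian_rmat:
  assumes "\<And>i j. i < d \<Longrightarrow> j < d \<Longrightarrow> F i j = F j i"
  shows "hermitian_mat d (rmat d F)"
  using assms by (simp add: hermitian_mat_def)

lemma psd_rmat_idem:
  assumes sym: "\<And>i j. i < d \<Longrightarrow> j < d \<Longrightarrow> F i j = F j i"
    and idem: "\<And>i j. i < d \<Longrightarrow> j < d \<Longrightarrow> (\<Sum>h<d. F i h * F h j) = F i j"
  shows "psd_mat d (rmat d F)"
proof -
  have "Re (conjugate v \<bullet> (rmat d F *\<^sub>v v)) \<ge> 0" if v: "v \<in> carrier_vec d" for v
  proof -
    define u where "u h = (\<Sum>j<d. complex_of_real (F h j) * v $ j)" for h
    have "conjugate v \<bullet> (rmat d F *\<^sub>v v) = (\<Sum>i<d. cnj (v $ i) * (\<Sum>j<d. complex_of_real (F i j) * v $ j))"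
      by (rule qform_rmat[OF v])
    also have "\<dots> = (\<Sum>i<d. cnj (v $ i) * (\<Sum>j<d. (\<Sum>h<d. complex_of_real (F i h) * complex_of_real (F h j)) * v $ j))"
    proof (intro sum.cong refl arg_cong2[where f="(*)"])
      fix i j assume "i \<in> {..<d}" "j \<in> {..<d}"
      then have "(\<Sum>h<d. F i h * F h j) = F i j" using idem by auto
      then show "complex_of_real (F i j) = (\<Sum>h<d. complex_of_real (F i h) * complex_of_real (F h j))"
        by (metis (no_types, lifting) of_real_mult of_real_sum sum.cong)
    qed
    also have "\<dots> = (\<Sum>i<d. \<Sum>j<d. \<Sum>h<d. cnj (v $ i) * complex_of_real (F i h) * complex_of_real (F h j) * v $ j)"
      by (simp add: sum_distrib_left sum_distrib_right mult_ac)
    also have "\<dots> = (\<Sum>i<d. \<Sum>h<d. \<Sum>j<d. cnj (v $ i) * complex_of_real (F i h) * complex_of_real (F h j) * v $ j)"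
      by (rule sum.cong[OF refl], rule sum.swap)
    also have "\<dots> = (\<Sum>h<d. \<Sum>i<d. \<Sum>j<d. cnj (v $ i) * complex_of_real (F i h) * complex_of_real (F h j) * v $ j)"
      by (rule sum.swap)
    also have "\<dots> = (\<Sum>h<d. (\<Sum>i<d. cnj (v $ i) * complex_of_real (F h i)) * u h)"
      unfolding u_def sum_product
      by (intro sum.cong refl) (simp add: sym mult_ac)
    also have "\<dots> = (\<Sum>h<d. cnj (u h) * u h)"
      unfolding u_def by (simp add: sum_distrib_right sum_distrib_left mult_ac)
    finally have eq: "conjugate v \<bullet> (rmat d F *\<^sub>v v) = (\<Sum>h<d. cnj (u h) * u h)" .
    have "Re (\<Sum>h<d. cnj (u h) * u h) = (\<Sum>h<d. (Re (u h))\<^sup>2 + (Im (u h))\<^sup>2)"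
      by (simp add: Re_sum power2_eq_square)
    then show ?thesis using eq by (simp add: sum_nonneg)
  qed
  then show ?thesis using hermitian_rmat[OF sym] by (simp add: psd_mat_def)
qed

lemma mtrace_rmat: "mtrace (rmat d F) = complex_of_real (\<Sum>i<d. F i i)"
  by (simp add: mtrace_def)

lemma one_minus_rmat: "1\<^sub>m d - rmat d F = rmat d (\<lambda>i j. (if i = j then 1 else 0) - F i j)"
  by (rule eq_matI) auto

lemma idem_compl:
  fixes F :: "nat \<Rightarrow> nat \<Rightarrow> real"
  assumes idem: "\<And>i j. i < d \<Longrightarrow> j < d \<Longrightarrow> (\<Sum>h<d. F i h * F h j) = F i j"
    and "i < d" "j < d"
  shows "(\<Sum>h<d. ((if i = h then 1 else 0) - F i h) * ((if h = j then 1 else 0) - F h j)) = (if i = j then 1 else 0) - F i j"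
proof -
  have "(\<Sum>h<d. ((if i = h then 1 else 0) - F i h) * ((if h = j then 1 else 0) - F h j))
    = (\<Sum>h<d. (if i = h then 1 else 0) * (if h = j then 1 else 0)) - (\<Sum>h<d. (if i = h then 1 else 0) * F h j)
      - (\<Sum>h<d. F i h * (if h = j then 1 else 0)) + (\<Sum>h<d. F i h * F h j)"
  proof -
    have "(\<Sum>h<d. ((if i = h then 1 else 0) - F i h) * ((if h = j then 1 else 0) - F h j))
      = (\<Sum>h<d. (if i = h then 1 else 0) * (if h = j then 1 else 0) - (if i = h then 1 else 0) * F h j
          - F i h * (if h = j then 1 else 0) + F i h * F h j)"
      by (rule sum.cong) (auto simp: algebra_simps)
    then show ?thesis by (simp only: sum.distrib sum_subtractf)
  qed
  also have "\<dots> = (if i = j then 1 else 0) - F i j - F i j + F i j"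
    using assms by (simp add: if_distrib[of "\<lambda>x. _ * x"] if_distrib[of "\<lambda>x. x * _"] sum.delta sum.delta' cong: if_cong)
  finally show ?thesis by simp
qed

lemma povm_rmat:
  assumes sym: "\<And>i j. i < d \<Longrightarrow> j < d \<Longrightarrow> F i j = F j i"
    and idem: "\<And>i j. i < d \<Longrightarrow> j < d \<Longrightarrow> (\<Sum>h<d. F i h * F h j) = F i j"
  shows "povm_elem d (rmat d F)"
  unfolding povm_elem_def one_minus_rmat
proof
  show "psd_mat d (rmat d F)" by (rule psd_rmat_idem[OF sym idem])
  show "psd_mat d (rmat d (\<lambda>i j. (if i = j then 1 else 0) - F i j))"
    by (rule psd_rmat_idem) (use sym idem_compl[OF idem] in auto)
qed

lemma density_pure:
  assumes "(\<Sum>i<d. (\<Psi> i)\<^sup>2) = 1"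
  shows "density_op d (rmat d (\<lambda>i j. \<Psi> i * \<Psi> j))"
proof -
  have "(\<Sum>h<d. \<Psi> i * \<Psi> h * (\<Psi> h * \<Psi> j)) = \<Psi> i * \<Psi> j" for i j
  proof -
    have "(\<Sum>h<d. \<Psi> i * \<Psi> h * (\<Psi> h * \<Psi> j)) = \<Psi> i * \<Psi> j * (\<Sum>h<d. (\<Psi> h)\<^sup>2)"
      by (simp add: sum_distrib_left power2_eq_square mult_ac)
    then show ?thesis using assms by simp
  qed
  then have "psd_mat d (rmat d (\<lambda>i j. \<Psi> i * \<Psi> j))"
    by (intro psd_rmat_idem) auto
  moreover have "mtrace (rmat d (\<lambda>i j. \<Psi> i * \<Psi> j)) = 1"
    using assms by (simp add: mtrace_rmat power2_eq_square)
  ultimately show ?thesis by (simp add: density_op_def)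
qed

lemma kron_rmat:
  assumes "dB > 0"
  shows "kron (rmat dA F) (rmat dB G) = rmat (dA * dB) (\<lambda>i j. F (i div dB) (j div dB) * G (i mod dB) (j mod dB))"
proof (rule eq_matI)
  fix i j assume "i < dim_row (rmat (dA * dB) (\<lambda>i j. F (i div dB) (j div dB) * G (i mod dB) (j mod dB)))"
    "j < dim_col (rmat (dA * dB) (\<lambda>i j. F (i div dB) (j div dB) * G (i mod dB) (j mod dB)))"
  then have ij: "i < dA * dB" "j < dA * dB" by auto
  then have "i div dB < dA" "j div dB < dA" "i mod dB < dB" "j mod dB < dB"
    using assms by (auto simp: less_mult_imp_div_less mult.commute)
  then show "kron (rmat dA F) (rmat dB G) $$ (i, j) = rmat (dA * dB) (\<lambda>i j. F (i div dB) (j div dB) * G (i mod dB) (j mod dB)) $$ (i, j)"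
    using ij by (simp add: kron_def)
qed (auto simp: kron_def)

lemma mtrace_mult_rmat:
  "mtrace (rmat d F * rmat d G) = complex_of_real (\<Sum>i<d. \<Sum>h<d. F i h * G h i)"
  by (simp add: mtrace_def scalar_prod_def atLeast0LessThan)

lemma pure_protocol:
  fixes \<Psi> \<Phi> :: "bool list \<Rightarrow> nat \<Rightarrow> real" and Mr :: "nat \<Rightarrow> nat \<Rightarrow> real"
  assumes nA: "\<And>x. length x = n \<Longrightarrow> (\<Sum>i<2^qa. (\<Psi> x i)\<^sup>2) = 1"
    and nB: "\<And>y. length y = n \<Longrightarrow> (\<Sum>i<2^qb. (\<Phi> y i)\<^sup>2) = 1"
    and sym: "\<And>i j. i < 2^(qa+qb) \<Longrightarrow> j < 2^(qa+qb) \<Longrightarrow> Mr i j = Mr j i"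
    and idem: "\<And>i j. i < 2^(qa+qb) \<Longrightarrow> j < 2^(qa+qb) \<Longrightarrow> (\<Sum>h<2^(qa+qb). Mr i h * Mr h j) = Mr i j"
    and corr: "\<And>x y. length x = n \<Longrightarrow> length y = n \<Longrightarrow>
      (let p = (\<Sum>i<2^(qa+qb). \<Sum>h<2^(qa+qb). Mr i h * ((\<Psi> x (h div 2^qb) * \<Phi> y (h mod 2^qb)) * (\<Psi> x (i div 2^qb) * \<Phi> y (i mod 2^qb))))
       in (if f x y then p else 1 - p) \<ge> 2/3)"
  shows "Q_smp n f \<le> qa + qb"
proof -
  define \<rho> where "\<rho> x = rmat (2^qa) (\<lambda>i j. \<Psi> x i * \<Psi> x j)" for x
  define \<sigma> where "\<sigma> y = rmat (2^qb) (\<lambda>i j. \<Phi> y i * \<Phi> y j)" for y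
  have "quantum_smp_protocol n f qa qb \<rho> \<sigma> (rmat (2^(qa+qb)) Mr)"
    unfolding quantum_smp_protocol_def
  proof (intro conjI allI impI)
    show "density_op (2 ^ qa) (\<rho> x)" if "length x = n" for x
      unfolding \<rho>_def by (rule density_pure[OF nA[OF that]])
    show "density_op (2 ^ qb) (\<sigma> y)" if "length y = n" for y
      unfolding \<sigma>_def by (rule density_pure[OF nB[OF that]])
    show "povm_elem (2 ^ (qa + qb)) (rmat (2 ^ (qa + qb)) Mr)"
      by (rule povm_rmat[OF sym idem])
    fix x y :: "bool list" assume xy: "length x = n" "length y = n"
    have "kron (\<rho> x) (\<sigma> y) = rmat (2^(qa+qb)) (\<lambda>i j. (\<Psi> x (i div 2^qb) * \<Psi> x (j div 2^qb)) * (\<Phi> y (i mod 2^qb) * \<Phi> y (j mod 2^qb)))"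
      unfolding \<rho>_def \<sigma>_def by (subst kron_rmat) (simp_all add: power_add)
    then have "Re (mtrace (rmat (2 ^ (qa + qb)) Mr * kron (\<rho> x) (\<sigma> y))) =
       (\<Sum>i<2^(qa+qb). \<Sum>h<2^(qa+qb). Mr i h * ((\<Psi> x (h div 2^qb) * \<Phi> y (h mod 2^qb)) * (\<Psi> x (i div 2^qb) * \<Phi> y (i mod 2^qb))))"
      by (simp add: mtrace_mult_rmat mult_ac)
    then show "let p1 = Re (mtrace (rmat (2 ^ (qa + qb)) Mr * kron (\<rho> x) (\<sigma> y))) in (if f x y then p1 else 1 - p1) \<ge> 2 / 3"
      using corr[OF xy] by (simp add: Let_def)
  qed
  then show ?thesis unfolding Q_smp_def by (intro Least_le) blast
qed

lemma sum_split_mult: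
  fixes G :: "nat \<Rightarrow> 'a::comm_monoid_add"
  shows "(\<Sum>i<p * q. G i) = (\<Sum>u<p. \<Sum>w<q. G (u * q + w))"
proof (induction p)
  case 0 then show ?case by simp
next
  case (Suc p)
  have "(\<Sum>i<Suc p * q. G i) = (\<Sum>i<p * q. G i) + (\<Sum>i\<in>{p*q..<p*q+q}. G i)"
    by (simp add: lessThan_atLeast0 sum.atLeastLessThan_concat add.commute)
  also have "(\<Sum>i\<in>{p*q..<p*q+q}. G i) = (\<Sum>w<q. G (p * q + w))"
    by (simp add: sum.shift_bounds_nat_ivl[where k="p*q" and m=0, simplified] lessThan_atLeast0 add.commute)
  finally show ?case using Suc by simp
qed

lemma sum4:
  fixes X Y :: "nat \<Rightarrow> nat \<Rightarrow> real"
  shows "(\<Sum>u\<in>A. \<Sum>w\<in>B. \<Sum>u'\<in>C. \<Sum>w'\<in>E. X w w' * Y u u') = (\<Sum>w\<in>B. \<Sum>w'\<in>E. X w w') * (\<Sum>u\<in>A. \<Sum>u'\<in>C. Y u u')"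
proof -
  have "(\<Sum>w\<in>B. \<Sum>u'\<in>C. \<Sum>w'\<in>E. X w w' * Y u u') = (\<Sum>u'\<in>C. (\<Sum>w\<in>B. \<Sum>w'\<in>E. X w w') * Y u u')" for u
    by (subst sum.swap) (simp add: sum_distrib_right)
  then show ?thesis by (simp add: sum_distrib_left)
qed

definition dig :: "nat \<Rightarrow> nat \<Rightarrow> nat \<Rightarrow> nat" where
  "dig D l i = (i div D ^ l) mod D"

lemma dig_0: "dig D 0 i = i mod D" by (simp add: dig_def)
lemma dig_Suc: "dig D (Suc l) i = dig D l (i div D)"
  by (simp add: dig_def div_mult2_eq mult.commute)
lemma dig_less: "D > 0 \<Longrightarrow> dig D l i < D" by (simp add: dig_def)

lemma prod_digits_sum:
  fixes F :: "nat \<Rightarrow> nat \<Rightarrow> nat \<Rightarrow> real"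
  assumes D: "D > 0"
  shows "(\<Sum>iA<D^k. \<Sum>iB<D^k. \<Prod>l<k. F l (dig D l iA) (dig D l iB)) = (\<Prod>l<k. \<Sum>a<D. \<Sum>b<D. F l a b)"
proof (induction k arbitrary: F)
  case 0 then show ?case by simp
next
  case (Suc k)
  have eqA: "u * D + w < D * D^k \<Longrightarrow> w < D \<Longrightarrow> (u * D + w) div D = u \<and> (u * D + w) mod D = w" for u w
    using D by simp
  have "(\<Sum>iA<D^Suc k. \<Sum>iB<D^Suc k. \<Prod>l<Suc k. F l (dig D l iA) (dig D l iB))
      = (\<Sum>iA<D^k * D. \<Sum>iB<D^k * D. F 0 (iA mod D) (iB mod D) * (\<Prod>l<k. F (Suc l) (dig D l (iA div D)) (dig D l (iB div D))))"
    by (simp only: prod.lessThan_Suc_shift dig_0 dig_Suc power_Suc2)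
  also have "\<dots> = (\<Sum>u<D^k. \<Sum>w<D. \<Sum>u'<D^k. \<Sum>w'<D. F 0 w w' * (\<Prod>l<k. F (Suc l) (dig D l u) (dig D l u')))"
    using D by (simp add: sum_split_mult)
  also have "\<dots> = (\<Sum>w<D. \<Sum>w'<D. F 0 w w') * (\<Sum>u<D^k. \<Sum>u'<D^k. (\<Prod>l<k. F (Suc l) (dig D l u) (dig D l u')))"
    by (rule sum4)
  also have "\<dots> = (\<Prod>l<Suc k. \<Sum>a<D. \<Sum>b<D. F l a b)"
    using Suc[of "\<lambda>l. F (Suc l)"] by (simp only: prod.lessThan_Suc_shift)
  finally show ?case .
qed

lemma sum_sq_split:
  fixes G :: "nat \<Rightarrow> nat \<Rightarrow> 'a::comm_monoid_add"
  assumes "K > 0"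
  shows "(\<Sum>i<K * K. G (i div K) (i mod K)) = (\<Sum>u<K. \<Sum>w<K. G u w)"
  using assms by (simp add: sum_split_mult)

lemma prod_digits_sum_global:
  fixes F :: "nat \<Rightarrow> nat \<Rightarrow> nat \<Rightarrow> real"
  assumes D: "D > 0"
  shows "(\<Sum>i<D^k * D^k. \<Prod>l<k. F l (dig D l (i div D^k)) (dig D l (i mod D^k))) = (\<Prod>l<k. \<Sum>a<D. \<Sum>b<D. F l a b)"
  using D by (simp add: sum_sq_split[where G="\<lambda>u w. \<Prod>l<k. F l (dig D l u) (dig D l w)"] prod_digits_sum)

definition Qp :: "bool \<Rightarrow> nat \<Rightarrow> nat \<Rightarrow> nat \<Rightarrow> nat \<Rightarrow> real" where
  "Qp s a b a' b' = (of_bool (a = a' \<and> b = b') + (if s then 1 else -1) * of_bool (a = b' \<and> b = a')) / 2"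

lemma sum_delta2:
  fixes D :: nat
  assumes "\<alpha> < D" "\<beta> < D"
  shows "(\<Sum>a<D. \<Sum>b<D. (of_bool (a = \<alpha> \<and> b = \<beta> \<and> P) :: real)) = of_bool P"
proof -
  have "(\<Sum>a<D. \<Sum>b<D. (of_bool (a = \<alpha> \<and> b = \<beta> \<and> P) :: real)) = (\<Sum>a<D. if a = \<alpha> then of_bool P else 0)"
  proof (intro sum.cong refl)
    fix a
    have "(\<Sum>b<D. (of_bool (a = \<alpha> \<and> b = \<beta> \<and> P) :: real)) = (\<Sum>b<D. if b = \<beta> then (if a = \<alpha> then of_bool P else 0) else 0)"
      by (rule sum.cong) auto
    also have "\<dots> = (if a = \<alpha> then of_bool P else 0)" using assms by (subst sum.delta) simp_all
    finally show "(\<Sum>b<D. (of_bool (a = \<alpha> \<and> b = \<beta> \<and> P) :: real)) = (if a = \<alpha> then of_bool P else 0)" .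
  qed
  also have "\<dots> = of_bool P" using assms by (simp add: sum.delta)
  finally show ?thesis .
qed

lemma Qp_mult:
  assumes "a0 < D" "b0 < D" "a1 < D" "b1 < D"
  shows "(\<Sum>a<D. \<Sum>b<D. Qp s a0 b0 a b * Qp s' a b a1 b1) = (if s = s' then Qp s a0 b0 a1 b1 else 0)"
proof -
  define \<sigma> where "\<sigma> = (if s then 1 else -1 :: real)"
  define \<sigma>' where "\<sigma>' = (if s' then 1 else -1 :: real)"
  have ob: "of_bool A * of_bool B = (of_bool (A \<and> B) :: real)" for A B by simp
  have e: "Qp s a0 b0 a b * Qp s' a b a1 b1 =
     (of_bool (a = a0 \<and> b = b0 \<and> (a0 = a1 \<and> b0 = b1)) + \<sigma>' * of_bool (a = a0 \<and> b = b0 \<and> (a0 = b1 \<and> b0 = a1))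
      + \<sigma> * of_bool (a = b0 \<and> b = a0 \<and> (a0 = b1 \<and> b0 = a1)) + \<sigma> * \<sigma>' * of_bool (a = b0 \<and> b = a0 \<and> (a0 = a1 \<and> b0 = b1))) / 4" for a b
  proof -
    have "Qp s a0 b0 a b * Qp s' a b a1 b1 = (of_bool (a0 = a \<and> b0 = b) * of_bool (a = a1 \<and> b = b1)
       + \<sigma>' * (of_bool (a0 = a \<and> b0 = b) * of_bool (a = b1 \<and> b = a1))
       + \<sigma> * (of_bool (a0 = b \<and> b0 = a) * of_bool (a = a1 \<and> b = b1))
       + \<sigma> * \<sigma>' * (of_bool (a0 = b \<and> b0 = a) * of_bool (a = b1 \<and> b = a1))) / 4"
      unfolding Qp_def \<sigma>_def[symmetric] \<sigma>'_def[symmetric] by (simp add: algebra_simps)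
    also have "\<dots> = (of_bool (a = a0 \<and> b = b0 \<and> (a0 = a1 \<and> b0 = b1)) + \<sigma>' * of_bool (a = a0 \<and> b = b0 \<and> (a0 = b1 \<and> b0 = a1))
      + \<sigma> * of_bool (a = b0 \<and> b = a0 \<and> (a0 = b1 \<and> b0 = a1)) + \<sigma> * \<sigma>' * of_bool (a = b0 \<and> b = a0 \<and> (a0 = a1 \<and> b0 = b1))) / 4"
      unfolding ob by (intro arg_cong2[where f="(/)"] arg_cong2[where f="(+)"] arg_cong2[where f="(*)"] refl arg_cong[where f=of_bool]) auto
    finally show ?thesis .
  qed
  have "(\<Sum>a<D. \<Sum>b<D. Qp s a0 b0 a b * Qp s' a b a1 b1) =
     (of_bool (a0 = a1 \<and> b0 = b1) + \<sigma>' * of_bool (a0 = b1 \<and> b0 = a1) + \<sigma> * of_bool (a0 = b1 \<and> b0 = a1)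
      + \<sigma> * \<sigma>' * of_bool (a0 = a1 \<and> b0 = b1)) / 4"
    unfolding e using assms
    by (simp only: sum.distrib sum_divide_distrib[symmetric] sum_distrib_left[symmetric] sum_delta2)
  also have "\<dots> = (if s = s' then Qp s a0 b0 a1 b1 else 0)"
    unfolding Qp_def \<sigma>_def \<sigma>'_def by (cases s; cases s') (simp_all add: field_simps)
  finally show ?thesis .
qed

lemma Qp_sym: "Qp s a b a' b' = Qp s a' b' a b"
proof -
  have "(a = a' \<and> b = b') = (a' = a \<and> b' = b)" "(a = b' \<and> b = a') = (a' = b \<and> b' = a)" by auto
  then show ?thesis unfolding Qp_def by (simp only:)
qed

definition Vk :: "nat \<Rightarrow> (nat \<Rightarrow> bool) set" where "Vk k = {v. \<forall>l. k \<le> l \<longrightarrow> \<not> v l}"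

lemma finite_Vk: "finite (Vk k)"
proof -
  have "Vk k \<subseteq> (\<lambda>S l. l \<in> S) ` Pow {..<k}"
  proof
    fix v assume v: "v \<in> Vk k"
    have "v = (\<lambda>l. l \<in> {l. l < k \<and> v l})"
      using v by (auto simp: Vk_def fun_eq_iff not_less[symmetric])
    then show "v \<in> (\<lambda>S l. l \<in> S) ` Pow {..<k}" by blast
  qed
  then show ?thesis by (rule finite_subset) auto
qed

definition PQ :: "nat \<Rightarrow> nat \<Rightarrow> (nat \<Rightarrow> bool) \<Rightarrow> nat \<Rightarrow> nat \<Rightarrow> real" where
  "PQ D k v i j = (\<Prod>l<k. Qp (v l) (dig D l (i div D^k)) (dig D l (i mod D^k)) (dig D l (j div D^k)) (dig D l (j mod D^k)))"

definition cf :: "nat \<Rightarrow> real \<Rightarrow> (nat \<Rightarrow> bool) \<Rightarrow> real" where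
  "cf k t v = of_bool (t \<le> real (card {l. l < k \<and> v l}))"

definition Mthr :: "nat \<Rightarrow> nat \<Rightarrow> real \<Rightarrow> nat \<Rightarrow> nat \<Rightarrow> real" where
  "Mthr D k t i j = (\<Sum>v\<in>Vk k. cf k t v * PQ D k v i j)"

lemma Mthr_sym: "Mthr D k t i j = Mthr D k t j i"
  unfolding Mthr_def PQ_def by (subst Qp_sym) simp

lemma PQ_mult:
  assumes D: "D > 0"
  shows "(\<Sum>h<D^k * D^k. PQ D k v i h * PQ D k v' h j) =
    (\<Prod>l<k. if v l = v' l then Qp (v l) (dig D l (i div D^k)) (dig D l (i mod D^k)) (dig D l (j div D^k)) (dig D l (j mod D^k)) else 0)"
proof -
  have "(\<Sum>h<D^k * D^k. PQ D k v i h * PQ D k v' h j) =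
     (\<Sum>h<D^k * D^k. \<Prod>l<k. (\<lambda>l a b. Qp (v l) (dig D l (i div D^k)) (dig D l (i mod D^k)) a b * Qp (v' l) a b (dig D l (j div D^k)) (dig D l (j mod D^k))) l (dig D l (h div D^k)) (dig D l (h mod D^k)))"
    unfolding PQ_def by (simp add: prod.distrib)
  also have "\<dots> = (\<Prod>l<k. \<Sum>a<D. \<Sum>b<D. Qp (v l) (dig D l (i div D^k)) (dig D l (i mod D^k)) a b * Qp (v' l) a b (dig D l (j div D^k)) (dig D l (j mod D^k)))"
    by (rule prod_digits_sum_global[OF D])
  also have "\<dots> = (\<Prod>l<k. if v l = v' l then Qp (v l) (dig D l (i div D^k)) (dig D l (i mod D^k)) (dig D l (j div D^k)) (dig D l (j mod D^k)) else 0)"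
    by (intro prod.cong refl Qp_mult) (simp_all add: dig_less D)
  finally show ?thesis .
qed

lemma prod_eq_vv:
  assumes "v \<in> Vk k" "v' \<in> Vk k"
  shows "(\<Prod>l<k. if v l = v' l then X l else (0::real)) = (if v = v' then (\<Prod>l<k. X l) else 0)"
proof (cases "v = v'")
  case True then show ?thesis by simp
next
  case False
  then obtain l where l: "v l \<noteq> v' l" by auto
  then have "l < k" using assms by (auto simp: Vk_def not_less[symmetric])
  have "(\<Prod>l<k. if v l = v' l then X l else (0::real)) = 0"
    by (rule prod_zero) (use l \<open>l < k\<close> in auto)
  then show ?thesis using False by simp
qed

lemma PQ_mult_eq:
  assumes D: "D > 0" and "v \<in> Vk k" "v' \<in> Vk k"
  shows "(\<Sum>h<D^k * D^k. PQ D k v i h * PQ D k v' h j) = (if v' = v then PQ D k v i j else 0)"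
  unfolding PQ_mult[OF D] prod_eq_vv[OF assms(2,3)] by (auto simp: PQ_def)

lemma sum_prod_swap3:
  fixes A B :: "'v \<Rightarrow> nat \<Rightarrow> real"
  shows "(\<Sum>h\<in>H. (\<Sum>v\<in>V. A v h) * (\<Sum>v'\<in>V. B v' h)) = (\<Sum>v\<in>V. \<Sum>v'\<in>V. \<Sum>h\<in>H. A v h * B v' h)"
proof -
  have "(\<Sum>h\<in>H. (\<Sum>v\<in>V. A v h) * (\<Sum>v'\<in>V. B v' h)) = (\<Sum>h\<in>H. \<Sum>v\<in>V. \<Sum>v'\<in>V. A v h * B v' h)"
    by (simp add: sum_product)
  also have "\<dots> = (\<Sum>v\<in>V. \<Sum>h\<in>H. \<Sum>v'\<in>V. A v h * B v' h)"
    by (rule sum.swap)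
  also have "\<dots> = (\<Sum>v\<in>V. \<Sum>v'\<in>V. \<Sum>h\<in>H. A v h * B v' h)"
    by (rule sum.cong[OF refl], rule sum.swap)
  finally show ?thesis .
qed

lemma Mthr_idem:
  assumes D: "D > 0"
  shows "(\<Sum>h<D^k * D^k. Mthr D k t i h * Mthr D k t h j) = Mthr D k t i j"
proof -
  have "(\<Sum>h<D^k * D^k. Mthr D k t i h * Mthr D k t h j)
     = (\<Sum>v\<in>Vk k. \<Sum>v'\<in>Vk k. \<Sum>h<D^k * D^k. (cf k t v * PQ D k v i h) * (cf k t v' * PQ D k v' h j))"
    unfolding Mthr_def by (rule sum_prod_swap3)
  also have "\<dots> = (\<Sum>v\<in>Vk k. \<Sum>v'\<in>Vk k. cf k t v * cf k t v' * (\<Sum>h<D^k * D^k. PQ D k v i h * PQ D k v' h j))"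
    by (simp add: sum_distrib_left mult_ac)
  also have "\<dots> = (\<Sum>v\<in>Vk k. \<Sum>v'\<in>Vk k. if v' = v then cf k t v * cf k t v * PQ D k v i j else 0)"
    by (intro sum.cong refl) (simp add: PQ_mult_eq[OF D])
  also have "\<dots> = (\<Sum>v\<in>Vk k. cf k t v * PQ D k v i j)"
    by (intro sum.cong refl) (simp add: sum.delta[OF finite_Vk] cf_def)
  finally show ?thesis unfolding Mthr_def .
qed

lemma delta_sum2:
  fixes D :: nat and g :: "nat \<Rightarrow> nat \<Rightarrow> real"
  assumes "\<alpha> < D" "\<beta> < D"
  shows "(\<Sum>a<D. \<Sum>b<D. of_bool (a = \<alpha> \<and> b = \<beta>) * g a b) = g \<alpha> \<beta>"
proof -
  have "(\<Sum>a<D. \<Sum>b<D. of_bool (a = \<alpha> \<and> b = \<beta>) * g a b) = (\<Sum>a<D. if a = \<alpha> then g a \<beta> else 0)"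
  proof (intro sum.cong refl)
    fix a
    have "(\<Sum>b<D. of_bool (a = \<alpha> \<and> b = \<beta>) * g a b) = (\<Sum>b<D. if b = \<beta> then (if a = \<alpha> then g a \<beta> else 0) else 0)"
      by (rule sum.cong) auto
    also have "\<dots> = (if a = \<alpha> then g a \<beta> else 0)" using assms by (subst sum.delta) simp_all
    finally show "(\<Sum>b<D. of_bool (a = \<alpha> \<and> b = \<beta>) * g a b) = (if a = \<alpha> then g a \<beta> else 0)" .
  qed
  also have "\<dots> = g \<alpha> \<beta>" using assms by (subst sum.delta) simp_all
  finally show ?thesis .
qed

lemma q_value:
  fixes \<psi> \<phi> :: "nat \<Rightarrow> real"
  shows "(\<Sum>a0<D. \<Sum>b0<D. (\<Sum>a<D. \<Sum>b<D. Qp s a0 b0 a b * (\<psi> a * \<phi> b)) * (\<psi> a0 * \<phi> b0))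
    = ((\<Sum>a<D. (\<psi> a)\<^sup>2) * (\<Sum>b<D. (\<phi> b)\<^sup>2) + (if s then 1 else -1) * (\<Sum>a<D. \<psi> a * \<phi> a)\<^sup>2) / 2"
proof -
  define \<sigma> where "\<sigma> = (if s then 1 else -1 :: real)"
  have inner: "(\<Sum>a<D. \<Sum>b<D. Qp s a0 b0 a b * (\<psi> a * \<phi> b)) = (\<psi> a0 * \<phi> b0 + \<sigma> * (\<psi> b0 * \<phi> a0)) / 2"
    if "a0 < D" "b0 < D" for a0 b0
  proof -
    have "(\<Sum>a<D. \<Sum>b<D. Qp s a0 b0 a b * (\<psi> a * \<phi> b)) =
      ((\<Sum>a<D. \<Sum>b<D. of_bool (a = a0 \<and> b = b0) * (\<psi> a * \<phi> b)) + \<sigma> * (\<Sum>a<D. \<Sum>b<D. of_bool (a = b0 \<and> b = a0) * (\<psi> a * \<phi> b))) / 2"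
    proof -
      have pt: "Qp s a0 b0 a b * (\<psi> a * \<phi> b) = (of_bool (a = a0 \<and> b = b0) * (\<psi> a * \<phi> b) + \<sigma> * (of_bool (a = b0 \<and> b = a0) * (\<psi> a * \<phi> b))) / 2" for a b
        unfolding Qp_def \<sigma>_def[symmetric] by (auto simp: field_simps)
      show ?thesis unfolding pt by (simp only: sum_divide_distrib[symmetric] sum.distrib sum_distrib_left)
    qed
    also have "\<dots> = (\<psi> a0 * \<phi> b0 + \<sigma> * (\<psi> b0 * \<phi> a0)) / 2"
      using that by (simp only: delta_sum2[OF that, where g="\<lambda>a b. \<psi> a * \<phi> b"] delta_sum2[OF that(2,1), where g="\<lambda>a b. \<psi> a * \<phi> b"])
    finally show ?thesis .
  qed
  have "(\<Sum>a0<D. \<Sum>b0<D. (\<Sum>a<D. \<Sum>b<D. Qp s a0 b0 a b * (\<psi> a * \<phi> b)) * (\<psi> a0 * \<phi> b0))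
     = (\<Sum>a0<D. \<Sum>b0<D. ((\<psi> a0)\<^sup>2 * (\<phi> b0)\<^sup>2 + \<sigma> * ((\<psi> a0 * \<phi> a0) * (\<psi> b0 * \<phi> b0))) / 2)"
  proof (intro sum.cong refl)
    fix a0 b0 assume "a0 \<in> {..<D}" "b0 \<in> {..<D}"
    then show "(\<Sum>a<D. \<Sum>b<D. Qp s a0 b0 a b * (\<psi> a * \<phi> b)) * (\<psi> a0 * \<phi> b0) = ((\<psi> a0)\<^sup>2 * (\<phi> b0)\<^sup>2 + \<sigma> * ((\<psi> a0 * \<phi> a0) * (\<psi> b0 * \<phi> b0))) / 2"
      by (subst inner) (auto simp: power2_eq_square algebra_simps)
  qed
  also have "\<dots> = ((\<Sum>a<D. (\<psi> a)\<^sup>2) * (\<Sum>b<D. (\<phi> b)\<^sup>2) + \<sigma> * (\<Sum>a<D. \<psi> a * \<phi> a)\<^sup>2) / 2"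
    by (simp add: sum_divide_distrib[symmetric] sum.distrib sum_distrib_left[symmetric] sum_product power2_eq_square)
  finally show ?thesis unfolding \<sigma>_def .
qed

lemma Mthr_accept_prod:
  fixes \<psi> \<phi> :: "nat \<Rightarrow> real"
  assumes D: "D > 0"
  shows "(\<Sum>i<D^k * D^k. \<Sum>h<D^k * D^k. Mthr D k t i h *
      (((\<Prod>l<k. \<psi> (dig D l (h div D^k))) * (\<Prod>l<k. \<phi> (dig D l (h mod D^k)))) *
       ((\<Prod>l<k. \<psi> (dig D l (i div D^k))) * (\<Prod>l<k. \<phi> (dig D l (i mod D^k))))))
    = (\<Sum>v\<in>Vk k. cf k t v * (\<Prod>l<k. \<Sum>a0<D. \<Sum>b0<D. (\<Sum>a<D. \<Sum>b<D. Qp (v l) a0 b0 a b * (\<psi> a * \<phi> b)) * (\<psi> a0 * \<phi> b0)))"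
proof -
  define K where "K = D^k"
  define W where "W i = (\<Prod>l<k. \<psi> (dig D l (i div K))) * (\<Prod>l<k. \<phi> (dig D l (i mod K)))" for i
  define G where "G l a0 b0 = (\<Sum>a<D. \<Sum>b<D. Qp l a0 b0 a b * (\<psi> a * \<phi> b))" for l a0 b0
  have inner: "(\<Sum>h<K * K. PQ D k v i h * W h) = (\<Prod>l<k. G (v l) (dig D l (i div K)) (dig D l (i mod K)))" for v i
  proof -
    have "(\<Sum>h<K * K. PQ D k v i h * W h) = (\<Sum>h<D^k * D^k. \<Prod>l<k. (\<lambda>l a b. Qp (v l) (dig D l (i div D^k)) (dig D l (i mod D^k)) a b * (\<psi> a * \<phi> b)) l (dig D l (h div D^k)) (dig D l (h mod D^k)))"
      unfolding PQ_def W_def K_def by (simp add: prod.distrib)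
    also have "\<dots> = (\<Prod>l<k. G (v l) (dig D l (i div K)) (dig D l (i mod K)))"
      unfolding G_def K_def by (rule prod_digits_sum_global[OF D, of "\<lambda>l a b. Qp (v l) (dig D l (i div D^k)) (dig D l (i mod D^k)) a b * (\<psi> a * \<phi> b)" k, simplified])
    finally show ?thesis .
  qed
  have outer: "(\<Sum>i<K * K. (\<Prod>l<k. G (v l) (dig D l (i div K)) (dig D l (i mod K))) * W i) =
     (\<Prod>l<k. \<Sum>a0<D. \<Sum>b0<D. G (v l) a0 b0 * (\<psi> a0 * \<phi> b0))" for v
  proof -
    have "(\<Sum>i<K * K. (\<Prod>l<k. G (v l) (dig D l (i div K)) (dig D l (i mod K))) * W i) =
      (\<Sum>i<D^k * D^k. \<Prod>l<k. (\<lambda>l a b. G (v l) a b * (\<psi> a * \<phi> b)) l (dig D l (i div D^k)) (dig D l (i mod D^k)))"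
      unfolding W_def K_def by (simp add: prod.distrib)
    also have "\<dots> = (\<Prod>l<k. \<Sum>a0<D. \<Sum>b0<D. G (v l) a0 b0 * (\<psi> a0 * \<phi> b0))"
      by (rule prod_digits_sum_global[OF D, of "\<lambda>l a b. G (v l) a b * (\<psi> a * \<phi> b)" k, simplified])
    finally show ?thesis .
  qed
  have "(\<Sum>i<K * K. \<Sum>h<K * K. Mthr D k t i h * (W h * W i)) =
     (\<Sum>i<K * K. \<Sum>v\<in>Vk k. cf k t v * ((\<Sum>h<K * K. PQ D k v i h * W h) * W i))"
    unfolding Mthr_def K_def
    by (intro sum.cong refl) (simp add: sum_distrib_right sum_distrib_left mult_ac sum.swap[of _ "{..<_}" "Vk k"])
  also have "\<dots> = (\<Sum>v\<in>Vk k. cf k t v * (\<Sum>i<K * K. (\<Sum>h<K * K. PQ D k v i h * W h) * W i))"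
    by (subst sum.swap) (simp add: sum_distrib_left)
  also have "\<dots> = (\<Sum>v\<in>Vk k. cf k t v * (\<Prod>l<k. \<Sum>a0<D. \<Sum>b0<D. G (v l) a0 b0 * (\<psi> a0 * \<phi> b0)))"
    by (simp only: inner outer)
  finally show ?thesis unfolding W_def K_def G_def .
qed

lemma Mthr_accept:
  fixes \<psi> \<phi> :: "nat \<Rightarrow> real"
  assumes D: "D > 0" and n\<psi>: "(\<Sum>a<D. (\<psi> a)\<^sup>2) = 1" and n\<phi>: "(\<Sum>a<D. (\<phi> a)\<^sup>2) = 1"
  shows "(\<Sum>i<D^k * D^k. \<Sum>h<D^k * D^k. Mthr D k t i h *
      (((\<Prod>l<k. \<psi> (dig D l (h div D^k))) * (\<Prod>l<k. \<phi> (dig D l (h mod D^k)))) *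
       ((\<Prod>l<k. \<psi> (dig D l (i div D^k))) * (\<Prod>l<k. \<phi> (dig D l (i mod D^k))))))
    = measure_pmf.prob (binomial_pmf k ((1 + (\<Sum>a<D. \<psi> a * \<phi> a)\<^sup>2) / 2)) {j. t \<le> real j}"
proof -
  define s where "s = (\<Sum>a<D. \<psi> a * \<phi> a)\<^sup>2"
  define p where "p = (1 + s) / 2"
  have s01: "0 \<le> s" "s \<le> 1"
    using Cauchy_Schwarz_ineq_sum[of \<psi> \<phi> "{..<D}"] n\<psi> n\<phi> by (simp_all add: s_def)
  then have p01: "p \<in> {0..1}" by (simp add: p_def)
  define P where "P = Pi_pmf {..<k} False (\<lambda>_. bernoulli_pmf p)"
  have q: "(\<Sum>a0<D. \<Sum>b0<D. (\<Sum>a<D. \<Sum>b<D. Qp sb a0 b0 a b * (\<psi> a * \<phi> b)) * (\<psi> a0 * \<phi> b0)) = pmf (bernoulli_pmf p) sb" for sb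
    using p01 by (simp add: q_value n\<psi> n\<phi> s_def[symmetric] p_def) (simp add: field_simps)
  have pv: "(\<Prod>l<k. pmf (bernoulli_pmf p) (v l)) = pmf P v" if "v \<in> Vk k" for v
    unfolding P_def using that by (subst pmf_Pi') (auto simp: Vk_def not_less[symmetric])
  have "(\<Sum>i<D^k * D^k. \<Sum>h<D^k * D^k. Mthr D k t i h *
      (((\<Prod>l<k. \<psi> (dig D l (h div D^k))) * (\<Prod>l<k. \<phi> (dig D l (h mod D^k)))) *
       ((\<Prod>l<k. \<psi> (dig D l (i div D^k))) * (\<Prod>l<k. \<phi> (dig D l (i mod D^k))))))
     = (\<Sum>v\<in>Vk k. cf k t v * pmf P v)"
    unfolding Mthr_accept_prod[OF D] q by (intro sum.cong refl) (simp add: pv)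
  also have "\<dots> = (\<Sum>v\<in>{v\<in>Vk k. t \<le> real (card {l. l < k \<and> v l})}. pmf P v)"
    unfolding cf_def by (subst sum.inter_filter[OF finite_Vk]) (intro sum.cong refl, simp)
  also have "\<dots> = measure_pmf.prob P {v\<in>Vk k. t \<le> real (card {l. l < k \<and> v l})}"
    by (simp add: measure_measure_pmf_finite finite_Vk)
  also have "\<dots> = measure_pmf.prob P {v. t \<le> real (card {l\<in>{..<k}. v l})}"
  proof -
    have sub: "set_pmf P \<subseteq> Vk k"
      unfolding P_def using set_Pi_pmf_subset[of "{..<k}" False "\<lambda>_. bernoulli_pmf p"]
      by (auto simp: Vk_def not_less[symmetric])
    have ce: "{l\<in>{..<k}. v l} = {l. l < k \<and> v l}" for v :: "nat \<Rightarrow> bool" by auto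
    have "{v\<in>Vk k. t \<le> real (card {l. l < k \<and> v l})} \<inter> set_pmf P = {v. t \<le> real (card {l\<in>{..<k}. v l})} \<inter> set_pmf P"
      using sub unfolding ce by blast
    then show ?thesis
      by (subst (1 2) measure_Int_set_pmf[symmetric]) (simp only:)
  qed
  also have "\<dots> = measure_pmf.prob (binomial_pmf k p) {j. t \<le> real j}"
    unfolding P_def by (subst binomial_pmf_altdef'[of "{..<k}" k p False]) (simp_all only: p01 measure_map_pmf vimage_def mem_Collect_eq finite_lessThan card_lessThan)
  finally show ?thesis unfolding p_def s_def .
qed

lemma prod_digits_sum1:
  fixes F :: "nat \<Rightarrow> nat \<Rightarrow> real"
  assumes D: "D > 0"
  shows "(\<Sum>i<D^k. \<Prod>l<k. F l (dig D l i)) = (\<Prod>l<k. \<Sum>a<D. F l a)"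
proof (induction k arbitrary: F)
  case 0 then show ?case by simp
next
  case (Suc k)
  have "(\<Sum>i<D^Suc k. \<Prod>l<Suc k. F l (dig D l i))
      = (\<Sum>i<D^k * D. F 0 (i mod D) * (\<Prod>l<k. F (Suc l) (dig D l (i div D))))"
    by (simp only: prod.lessThan_Suc_shift dig_0 dig_Suc power_Suc2)
  also have "\<dots> = (\<Sum>u<D^k. \<Sum>w<D. F 0 w * (\<Prod>l<k. F (Suc l) (dig D l u)))"
    using D by (simp add: sum_split_mult)
  also have "\<dots> = (\<Sum>w<D. F 0 w) * (\<Sum>u<D^k. \<Prod>l<k. F (Suc l) (dig D l u))"
    by (simp add: sum_distrib_right sum_distrib_left)
  also have "\<dots> = (\<Prod>l<Suc k. \<Sum>a<D. F l a)"
    using Suc[of "\<lambda>l. F (Suc l)"] by (simp only: prod.lessThan_Suc_shift)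
  finally show ?case .
qed

lemma amp_protocol:
  fixes \<psi> \<phi> :: "bool list \<Rightarrow> nat \<Rightarrow> real" and e k :: nat and t :: real
  assumes n\<psi>: "\<And>x. length x = n \<Longrightarrow> (\<Sum>a<2^e. (\<psi> x a)\<^sup>2) = 1"
    and n\<phi>: "\<And>y. length y = n \<Longrightarrow> (\<Sum>a<2^e. (\<phi> y a)\<^sup>2) = 1"
    and corr: "\<And>x y. length x = n \<Longrightarrow> length y = n \<Longrightarrow>
      (let p = measure_pmf.prob (binomial_pmf k ((1 + (\<Sum>a<2^e. \<psi> x a * \<phi> y a)\<^sup>2) / 2)) {j. t \<le> real j}
       in (if f x y then p else 1 - p) \<ge> 2/3)"
  shows "Q_smp n f \<le> e * k + e * k"
proof -
  define D :: nat where "D = 2^e"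
  have D: "D > 0" by (simp add: D_def)
  have K: "(2::nat)^(e*k) = D^k" "(2::nat)^(e*k+e*k) = D^k * D^k"
    by (simp_all add: D_def power_mult power_add)
  define \<Psi> where "\<Psi> x i = (\<Prod>l<k. \<psi> x (dig D l i))" for x i
  define \<Phi> where "\<Phi> y i = (\<Prod>l<k. \<phi> y (dig D l i))" for y i
  show ?thesis
  proof (rule pure_protocol[where \<Psi>=\<Psi> and \<Phi>=\<Phi> and Mr="Mthr D k t"])
    show "(\<Sum>i<2^(e*k). (\<Psi> x i)\<^sup>2) = 1" if "length x = n" for x
      unfolding K \<Psi>_def
      using prod_digits_sum1[OF D, of "\<lambda>l a. (\<psi> x a)\<^sup>2" k] n\<psi>[OF that] by (simp add: D_def prod_power_distrib)
    show "(\<Sum>i<2^(e*k). (\<Phi> y i)\<^sup>2) = 1" if "length y = n" for y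
      unfolding K \<Phi>_def
      using prod_digits_sum1[OF D, of "\<lambda>l a. (\<phi> y a)\<^sup>2" k] n\<phi>[OF that] by (simp add: D_def prod_power_distrib)
    show "Mthr D k t i j = Mthr D k t j i" for i j by (rule Mthr_sym)
    show "(\<Sum>h<2^(e*k+e*k). Mthr D k t i h * Mthr D k t h j) = Mthr D k t i j" for i j
      unfolding K by (rule Mthr_idem[OF D])
    fix x y :: "bool list" assume xy: "length x = n" "length y = n"
    have "(\<Sum>i<2^(e*k+e*k). \<Sum>h<2^(e*k+e*k). Mthr D k t i h * ((\<Psi> x (h div 2^(e*k)) * \<Phi> y (h mod 2^(e*k))) * (\<Psi> x (i div 2^(e*k)) * \<Phi> y (i mod 2^(e*k)))))
       = measure_pmf.prob (binomial_pmf k ((1 + (\<Sum>a<2^e. \<psi> x a * \<phi> y a)\<^sup>2) / 2)) {j. t \<le> real j}"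
      unfolding K \<Psi>_def \<Phi>_def using Mthr_accept[OF D, of "\<psi> x" "\<phi> y" k t] n\<psi>[OF xy(1)] n\<phi>[OF xy(2)]
      by (simp add: D_def)
    then show "let p = \<Sum>i<2^(e*k+e*k). \<Sum>h<2^(e*k+e*k). Mthr D k t i h * ((\<Psi> x (h div 2^(e*k)) * \<Phi> y (h mod 2^(e*k))) * (\<Psi> x (i div 2^(e*k)) * \<Phi> y (i mod 2^(e*k))))
      in (if f x y then p else 1 - p) \<ge> 2/3"
      using corr[OF xy] by (simp add: Let_def)
  qed
qed

primrec enc :: "bool list \<Rightarrow> nat" where
  "enc [] = 0"
| "enc (b # bs) = of_bool b + 2 * enc bs"

primrec dec :: "nat \<Rightarrow> nat \<Rightarrow> bool list" where
  "dec 0 m = []"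
| "dec (Suc l) m = odd m # dec l (m div 2)"

lemma enc_less: "enc x < 2 ^ length x"
  by (induction x) auto

lemma dec_enc: "dec (length x) (enc x) = x"
  by (induction x) auto

lemma enc_inj: "length x = length y \<Longrightarrow> enc x = enc y \<Longrightarrow> x = y"
  by (metis dec_enc)

lemma delta2:
  fixes g :: "nat \<Rightarrow> nat \<Rightarrow> real"
  assumes "\<iota> < N"
  shows "(\<Sum>i<N. \<Sum>h<N. if i = \<iota> then if h = \<iota> then g i h else 0 else 0) = g \<iota> \<iota>"
proof -
  have inner: "(\<Sum>h<N. if i = \<iota> then if h = \<iota> then g i h else 0 else 0) = (if i = \<iota> then g i \<iota> else 0)" for i
  proof (cases "i = \<iota>")
    case True
    then have "(\<Sum>h<N. if i = \<iota> then if h = \<iota> then g i h else 0 else 0) = (\<Sum>h<N. if h = \<iota> then g i h else 0)" by simp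
    also have "\<dots> = g i \<iota>" using assms by (subst sum.delta) simp_all
    finally show ?thesis using True by simp
  next
    case False then show ?thesis by simp
  qed
  show ?thesis unfolding inner using assms by (subst sum.delta) simp_all
qed

lemma trivial_protocol: "Q_smp n f \<le> n + n"
proof -
  define \<Psi> where "\<Psi> x i = (of_bool (i = enc x) :: real)" for x i
  define Mr where "Mr i j = (of_bool (i = j \<and> (\<exists>x y. length x = n \<and> length y = n \<and> i = enc x * 2^n + enc y \<and> f x y)) :: real)" for i j
  show ?thesis
  proof (rule pure_protocol[where \<Psi>=\<Psi> and \<Phi>=\<Psi> and Mr=Mr])
    show "(\<Sum>i<2^n. (\<Psi> x i)\<^sup>2) = 1" if "length x = n" for x
    proof -
      have "(\<Sum>i<2^n. (\<Psi> x i)\<^sup>2) = (\<Sum>i<2^n. if i = enc x then 1 else 0)"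
        by (rule sum.cong) (auto simp: \<Psi>_def)
      also have "\<dots> = 1" using enc_less[of x] that by (subst sum.delta) simp_all
      finally show ?thesis .
    qed
    then show "(\<Sum>i<2^n. (\<Psi> x i)\<^sup>2) = 1" if "length x = n" for x using that .
    show "Mr i j = Mr j i" for i j unfolding Mr_def by auto
    show "(\<Sum>h<2^(n+n). Mr i h * Mr h j) = Mr i j" if "i < 2^(n+n)" "j < 2^(n+n)" for i j
    proof -
      have "(\<Sum>h<2^(n+n). Mr i h * Mr h j) = (\<Sum>h<2^(n+n). if h = i then Mr i h * Mr h j else 0)"
        by (rule sum.cong) (auto simp: Mr_def)
      also have "\<dots> = Mr i i * Mr i j" using that by (subst sum.delta) simp_all
      also have "\<dots> = Mr i j" by (auto simp: Mr_def)
      finally show ?thesis .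
    qed
    fix x y :: "bool list" assume xy: "length x = n" "length y = n"
    define \<iota> where "\<iota> = enc x * 2^n + enc y"
    have ey: "enc y < 2^n" using enc_less[of y] xy by simp
    have ex: "enc x < 2^n" using enc_less[of x] xy by simp
    have \<iota>: "\<iota> < 2^(n+n)"
    proof -
      have "\<iota> < enc x * 2^n + 2^n" using ey by (simp add: \<iota>_def)
      also have "\<dots> = (enc x + 1) * 2^n" by simp
      also have "\<dots> \<le> 2^n * 2^n" using ex by (intro mult_right_mono) auto
      finally show ?thesis by (simp add: power_add)
    qed
    have w: "\<Psi> x (h div 2^n) * \<Psi> y (h mod 2^n) = of_bool (h = \<iota>)" for h
    proof -
      have "(h div 2^n = enc x \<and> h mod 2^n = enc y) \<longleftrightarrow> h = \<iota>"
        using ey unfolding \<iota>_def by (metis div_mult_self1 div_less mod_mult_self3 mod_less add.commute add_0 div_mult_mod_eq power_not_zero zero_neq_numeral)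
      then show ?thesis by (auto simp: \<Psi>_def)
    qed
    have "(\<Sum>i<2^(n+n). \<Sum>h<2^(n+n). Mr i h * ((\<Psi> x (h div 2^n) * \<Psi> y (h mod 2^n)) * (\<Psi> x (i div 2^n) * \<Psi> y (i mod 2^n))))
       = (\<Sum>i<2^(n+n). \<Sum>h<2^(n+n). if i = \<iota> then (if h = \<iota> then Mr i h else 0) else 0)"
      unfolding w by (intro sum.cong refl) auto
    also have "\<dots> = Mr \<iota> \<iota>" by (rule delta2[OF \<iota>])
    also have "\<dots> = of_bool (f x y)"
    proof -
      have "(\<exists>x' y'. length x' = n \<and> length y' = n \<and> \<iota> = enc x' * 2^n + enc y' \<and> f x' y') \<longleftrightarrow> f x y"
      proof
        assume "\<exists>x' y'. length x' = n \<and> length y' = n \<and> \<iota> = enc x' * 2^n + enc y' \<and> f x' y'"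
        then obtain x' y' where h: "length x' = n" "length y' = n" "\<iota> = enc x' * 2^n + enc y'" "f x' y'" by blast
        have ey': "enc y' < 2^n" using enc_less[of y'] h by simp
        have "enc x' = enc x \<and> enc y' = enc y"
          using h(3) ey ey' unfolding \<iota>_def
          by (metis add.commute div_mult_self1 div_less mod_mult_self3 mod_less add_0 power_not_zero zero_neq_numeral)
        then have "x' = x" "y' = y" using enc_inj h xy by auto
        then show "f x y" using h by simp
      qed (use xy \<iota>_def in blast)
      then show ?thesis by (simp add: Mr_def)
    qed
    finally show "let p = \<Sum>i<2^(n+n). \<Sum>h<2^(n+n). Mr i h * ((\<Psi> x (h div 2^n) * \<Psi> y (h mod 2^n)) * (\<Psi> x (i div 2^n) * \<Psi> y (i mod 2^n)))
      in (if f x y then p else 1 - p) \<ge> 2/3" by (simp add: Let_def)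
  qed
qed

lemma fact_basis:
  fixes G :: "bool list \<Rightarrow> bool list \<Rightarrow> real" and lm :: nat
  assumes G01: "\<And>a b. 0 \<le> G a b \<and> G a b \<le> 1"
  shows "\<exists>(s::bool list \<Rightarrow> nat \<Rightarrow> real) (t::bool list \<Rightarrow> nat \<Rightarrow> real). (\<forall>a. length a = lm \<longrightarrow> (\<Sum>j<2^(lm+1). (s a j)\<^sup>2) = 1) \<and> (\<forall>b. (\<Sum>j<2^(lm+1). (t b j)\<^sup>2) = 1)
     \<and> (\<forall>a b. length a = lm \<longrightarrow> (\<Sum>j<2^(lm+1). s a j * t b j) = G a b / sqrt (2^lm))"
proof -
  define N :: nat where "N = 2^lm"
  have N: "N > 0" by (simp add: N_def)
  define \<kappa> where "\<kappa> = 1 / sqrt (real N)"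
  have \<kappa>2: "\<kappa>\<^sup>2 = 1 / real N" using N by (simp add: \<kappa>_def power_divide)
  define S where "S b = (\<Sum>a'<N. (G (dec lm a') b)\<^sup>2)" for b
  have SN: "S b \<le> real N" for b
  proof -
    have "S b \<le> (\<Sum>a'<N. 1)" unfolding S_def
      by (intro sum_mono) (use G01 in \<open>auto intro: power_le_one\<close>)
    then show ?thesis by simp
  qed
  have kS: "\<kappa>\<^sup>2 * S b \<le> 1" for b using SN[of b] N by (simp add: \<kappa>2 field_simps)
  define s where "s a j = (of_bool (j = 2 * enc a) :: real)" for a j
  define t where "t b j = (if even j then \<kappa> * G (dec lm (j div 2)) b else if j = 1 then sqrt (1 - \<kappa>\<^sup>2 * S b) else 0)" for b j
  have pw: "(2::nat)^(lm+1) = N * 2" by (simp add: N_def)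
  have "(\<Sum>j<2^(lm+1). (s a j)\<^sup>2) = 1" if "length a = lm" for a
  proof -
    have "(\<Sum>j<2^(lm+1). (s a j)\<^sup>2) = (\<Sum>j<2^(lm+1). if j = 2 * enc a then 1 else 0)"
      by (rule sum.cong) (auto simp: s_def)
    also have "\<dots> = 1" using enc_less[of a] that by (subst sum.delta) simp_all
    finally show ?thesis .
  qed
  moreover have "(\<Sum>j<2^(lm+1). (t b j)\<^sup>2) = 1" for b
  proof -
    have "(\<Sum>j<2^(lm+1). (t b j)\<^sup>2) = (\<Sum>u<N. \<Sum>w<2. (t b (u * 2 + w))\<^sup>2)"
      unfolding pw by (rule sum_split_mult)
    also have "\<dots> = (\<Sum>u<N. \<kappa>\<^sup>2 * (G (dec lm u) b)\<^sup>2 + (if u = 0 then 1 - \<kappa>\<^sup>2 * S b else 0))"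
    proof (intro sum.cong refl)
      fix u
      have s2: "(\<Sum>w<2. F w) = F 0 + F 1" for F :: "nat \<Rightarrow> real" by (simp add: numeral_2_eq_2)
      have t0: "t b (u * 2 + 0) = \<kappa> * G (dec lm u) b" by (simp add: t_def)
      have t1: "t b (u * 2 + 1) = (if u = 0 then sqrt (1 - \<kappa>\<^sup>2 * S b) else 0)" by (simp add: t_def)
      show "(\<Sum>w<2. (t b (u * 2 + w))\<^sup>2) = \<kappa>\<^sup>2 * (G (dec lm u) b)\<^sup>2 + (if u = 0 then 1 - \<kappa>\<^sup>2 * S b else 0)"
        unfolding s2 t0 t1 using kS[of b] by (simp add: power_mult_distrib)
    qed
    also have "\<dots> = \<kappa>\<^sup>2 * S b + (1 - \<kappa>\<^sup>2 * S b)"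
      using N by (simp add: sum.distrib S_def sum_distrib_left)
    finally show ?thesis by simp
  qed
  moreover have "(\<Sum>j<2^(lm+1). s a j * t b j) = G a b / sqrt (2^lm)" if "length a = lm" for a b
  proof -
    have "(\<Sum>j<2^(lm+1). s a j * t b j) = (\<Sum>j<2^(lm+1). if j = 2 * enc a then t b j else 0)"
      by (rule sum.cong) (auto simp: s_def)
    also have "\<dots> = t b (2 * enc a)" using enc_less[of a] that by (subst sum.delta) simp_all
    also have "\<dots> = \<kappa> * G a b" using that by (simp add: t_def dec_enc[of a, simplified that])
    finally show ?thesis by (simp add: \<kappa>_def N_def)
  qed
  ultimately show ?thesis by blast
qed

lemma fact_min:
  fixes G :: "bool list \<Rightarrow> bool list \<Rightarrow> real" and ca cb :: nat
  assumes G01: "\<And>a b. 0 \<le> G a b \<and> G a b \<le> 1"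
  shows "\<exists>(u::bool list \<Rightarrow> nat \<Rightarrow> real) (w::bool list \<Rightarrow> nat \<Rightarrow> real).
     (\<forall>a. length a = ca \<longrightarrow> (\<Sum>j<2^(min ca cb+1). (u a j)\<^sup>2) = 1) \<and> (\<forall>b. length b = cb \<longrightarrow> (\<Sum>j<2^(min ca cb+1). (w b j)\<^sup>2) = 1)
     \<and> (\<forall>a b. length a = ca \<longrightarrow> length b = cb \<longrightarrow> (\<Sum>j<2^(min ca cb+1). u a j * w b j) = G a b / sqrt (2^(min ca cb)))"
proof (cases "ca \<le> cb")
  case True
  then have m: "min ca cb = ca" by simp
  obtain s t where st: "\<forall>a. length a = ca \<longrightarrow> (\<Sum>j<(2::nat)^(ca+1). (s a j)\<^sup>2) = 1" "\<forall>b. (\<Sum>j<2^(ca+1). (t b j)\<^sup>2) = 1"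
    "\<forall>a b. length a = ca \<longrightarrow> (\<Sum>j<2^(ca+1). s a j * t b j) = G a b / sqrt (2^ca)"
    using fact_basis[of G ca] G01 by blast
  show ?thesis unfolding m
    by (rule exI[of _ s], rule exI[of _ t]) (use st in simp)
next
  case False
  then have m: "min ca cb = cb" by simp
  obtain s t where st: "\<forall>b. length b = cb \<longrightarrow> (\<Sum>j<(2::nat)^(cb+1). (s b j)\<^sup>2) = 1" "\<forall>a. (\<Sum>j<2^(cb+1). (t a j)\<^sup>2) = 1"
    "\<forall>b a. length b = cb \<longrightarrow> (\<Sum>j<2^(cb+1). s b j * t a j) = G a b / sqrt (2^cb)"
    using fact_basis[of "\<lambda>b a. G a b" cb] G01 by blast
  show ?thesis unfolding m
    by (rule exI[of _ t], rule exI[of _ s]) (use st in \<open>simp add: mult.commute\<close>)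
qed

lemma percopy:
  fixes u w :: "bool list \<Rightarrow> nat \<Rightarrow> real" and G :: "bool list \<Rightarrow> bool list \<Rightarrow> real"
    and A B :: "bool list \<Rightarrow> nat \<Rightarrow> bool list" and \<omega> :: "nat \<Rightarrow> nat"
  assumes nu: "\<And>a. length a = ca \<Longrightarrow> (\<Sum>j<D0. (u a j)\<^sup>2) = 1"
    and nw: "\<And>b. length b = cb \<Longrightarrow> (\<Sum>j<D0. (w b j)\<^sup>2) = 1"
    and uw: "\<And>a b. length a = ca \<Longrightarrow> length b = cb \<Longrightarrow> (\<Sum>j<D0. u a j * w b j) = G a b * \<kappa>"
    and lA: "\<And>x r. length x = n \<Longrightarrow> length (A x r) = ca"
    and lB: "\<And>y r. length y = n \<Longrightarrow> length (B y r) = cb"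
    and D0: "D0 > 0" and m: "m > 0"
  defines "\<psi> \<equiv> \<lambda>x j. u (A x (\<omega> (j div D0))) (j mod D0) / sqrt m"
    and "\<phi> \<equiv> \<lambda>y j. w (B y (\<omega> (j div D0))) (j mod D0) / sqrt m"
  shows "length x = n \<Longrightarrow> (\<Sum>j<m * D0. (\<psi> x j)\<^sup>2) = 1"
    and "length y = n \<Longrightarrow> (\<Sum>j<m * D0. (\<phi> y j)\<^sup>2) = 1"
    and "length x = n \<Longrightarrow> length y = n \<Longrightarrow> (\<Sum>j<m * D0. \<psi> x j * \<phi> y j) = (\<Sum>i<m. G (A x (\<omega> i)) (B y (\<omega> i))) / m * \<kappa>"
proof -
  have dm: "(i * D0 + r) div D0 = i" "(i * D0 + r) mod D0 = r" if "r < D0" for i r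
    using that D0 by simp_all
  show "(\<Sum>j<m * D0. (\<psi> x j)\<^sup>2) = 1" if "length x = n"
  proof -
    have "(\<Sum>j<m * D0. (\<psi> x j)\<^sup>2) = (\<Sum>i<m. \<Sum>r<D0. (\<psi> x (i * D0 + r))\<^sup>2)" by (rule sum_split_mult)
    also have "\<dots> = (\<Sum>i<m. (\<Sum>r<D0. (u (A x (\<omega> i)) r)\<^sup>2) / m)"
      unfolding \<psi>_def using m by (intro sum.cong refl) (simp add: dm power_divide sum_divide_distrib)
    also have "\<dots> = 1" using nu[OF lA[OF that]] m by simp
    finally show ?thesis .
  qed
  show "(\<Sum>j<m * D0. (\<phi> y j)\<^sup>2) = 1" if "length y = n"
  proof -
    have "(\<Sum>j<m * D0. (\<phi> y j)\<^sup>2) = (\<Sum>i<m. \<Sum>r<D0. (\<phi> y (i * D0 + r))\<^sup>2)" by (rule sum_split_mult)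
    also have "\<dots> = (\<Sum>i<m. (\<Sum>r<D0. (w (B y (\<omega> i)) r)\<^sup>2) / m)"
      unfolding \<phi>_def using m by (intro sum.cong refl) (simp add: dm power_divide sum_divide_distrib)
    also have "\<dots> = 1" using nw[OF lB[OF that]] m by simp
    finally show ?thesis .
  qed
  show "(\<Sum>j<m * D0. \<psi> x j * \<phi> y j) = (\<Sum>i<m. G (A x (\<omega> i)) (B y (\<omega> i))) / m * \<kappa>" if "length x = n" "length y = n"
  proof -
    have "(\<Sum>j<m * D0. \<psi> x j * \<phi> y j) = (\<Sum>i<m. \<Sum>r<D0. \<psi> x (i * D0 + r) * \<phi> y (i * D0 + r))" by (rule sum_split_mult)
    also have "\<dots> = (\<Sum>i<m. (\<Sum>r<D0. u (A x (\<omega> i)) r * w (B y (\<omega> i)) r) / m)"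
      unfolding \<psi>_def \<phi>_def using m by (intro sum.cong refl) (simp add: dm sum_divide_distrib)
    also have "\<dots> = (\<Sum>i<m. G (A x (\<omega> i)) (B y (\<omega> i)) * \<kappa> / m)"
      using uw lA[OF that(1)] lB[OF that(2)] by simp
    also have "\<dots> = (\<Sum>i<m. G (A x (\<omega> i)) (B y (\<omega> i))) / m * \<kappa>"
      by (simp add: sum_divide_distrib[symmetric] sum_distrib_right[symmetric])
    finally show ?thesis .
  qed
qed

lemma newman_single:
  fixes R :: "nat pmf" and h :: "nat \<Rightarrow> real" and m :: nat and \<epsilon> :: real
  assumes h01: "\<And>r. 0 \<le> h r \<and> h r \<le> 1" and m: "m > 0" and \<epsilon>: "\<epsilon> \<ge> 0"
  defines "M \<equiv> Pi_pmf {..<m} (0::nat) (\<lambda>_. R)"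
  shows "measure_pmf.prob M {\<omega>. (\<Sum>i<m. h (\<omega> i)) / m \<le> measure_pmf.expectation R h - \<epsilon>} \<le> exp (- 2 * m * \<epsilon>\<^sup>2)"
    and "measure_pmf.prob M {\<omega>. (\<Sum>i<m. h (\<omega> i)) / m \<ge> measure_pmf.expectation R h + \<epsilon>} \<le> exp (- 2 * m * \<epsilon>\<^sup>2)"
proof -
  have comp: "map_pmf (\<lambda>\<omega>. \<omega> i) M = R" if "i < m" for i
    unfolding M_def using that by (subst Pi_pmf_component) auto
  interpret H: Hoeffding_ineq_iid "measure_pmf M" "{..<m}" "\<lambda>i \<omega>. h (\<omega> i)" "\<lambda>\<omega>. h (\<omega> 0)" 0 1 "measure_pmf.expectation M (\<lambda>\<omega>. h (\<omega> 0))"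
  proof unfold_locales
    show "prob_space.indep_vars (measure_pmf M) (\<lambda>_. borel) (\<lambda>i \<omega>. h (\<omega> i)) {..<m}"
      unfolding M_def
      by (intro prob_space.indep_vars_compose2[OF _ indep_vars_Pi_pmf, where Y="\<lambda>_. h"])
         (auto simp: measure_pmf.prob_space_axioms)
  next
    fix i assume "i \<in> {..<m}"
    then have "i < m" by simp
    have "distr (measure_pmf M) borel (\<lambda>\<omega>. h (\<omega> i)) = distr (measure_pmf (map_pmf (\<lambda>\<omega>. \<omega> i) M)) borel h"
      unfolding map_pmf_rep_eq by (subst distr_distr) (auto simp: o_def)
    also have "\<dots> = distr (measure_pmf (map_pmf (\<lambda>\<omega>. \<omega> 0) M)) borel h"
      using comp[OF \<open>i < m\<close>] comp[OF m] by simp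
    also have "\<dots> = distr (measure_pmf M) borel (\<lambda>\<omega>. h (\<omega> 0))"
      unfolding map_pmf_rep_eq by (subst distr_distr) (auto simp: o_def)
    finally show "distr (measure_pmf M) borel (\<lambda>\<omega>. h (\<omega> i)) = distr (measure_pmf M) borel (\<lambda>\<omega>. h (\<omega> 0))" .
  qed (use h01 in auto)
  have mu: "measure_pmf.expectation M (\<lambda>\<omega>. h (\<omega> 0)) = measure_pmf.expectation R h"
  proof -
    have "measure_pmf.expectation M (\<lambda>\<omega>. h (\<omega> 0)) = measure_pmf.expectation (map_pmf (\<lambda>\<omega>. \<omega> 0) M) h"
      by simp
    then show ?thesis using comp[OF m] by simp
  qed
  have ne: "{..<m} \<noteq> {}" using m by auto
  show "measure_pmf.prob M {\<omega>. (\<Sum>i<m. h (\<omega> i)) / m \<le> measure_pmf.expectation R h - \<epsilon>} \<le> exp (- 2 * m * \<epsilon>\<^sup>2)"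
    using H.Hoeffding_ineq_le'[OF \<epsilon> _ ne] mu by simp
  show "measure_pmf.prob M {\<omega>. (\<Sum>i<m. h (\<omega> i)) / m \<ge> measure_pmf.expectation R h + \<epsilon>} \<le> exp (- 2 * m * \<epsilon>\<^sup>2)"
    using H.Hoeffding_ineq_ge'[OF \<epsilon> _ ne] mu by simp
qed

lemma exp_bound_4n:
  fixes n m :: nat
  assumes n: "n \<ge> 1" and m: "real m \<ge> 256 * n"
  shows "real (2^n * 2^n) * exp (- real m / 72) < 1"
proof -
  have "exp (32/9::real) \<ge> 1 + 32/9" by (rule exp_ge_add_one_self)
  then have e: "exp (32/9) > (4::real)" by simp
  have "(4::real)^n < exp (32/9) ^ n" using e n by (intro power_strict_mono) auto
  also have "\<dots> = exp (real n * (32/9))" by (rule exp_of_nat_mult[symmetric])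
  also have "\<dots> \<le> exp (real m / 72)" using m by simp
  finally have "(4::real)^n < exp (real m / 72)" .
  moreover have "real (2^n * 2^n) = (4::real)^n" by (simp add: power_mult_distrib[symmetric])
  ultimately show ?thesis by (simp add: exp_minus field_simps)
qed

lemma newman:
  fixes R :: "nat pmf" and h :: "bool list \<Rightarrow> bool list \<Rightarrow> nat \<Rightarrow> real" and f :: "bool list \<Rightarrow> bool list \<Rightarrow> bool" and n m :: nat
  assumes h01: "\<And>x y r. 0 \<le> h x y r \<and> h x y r \<le> 1"
    and corr: "\<And>x y. length x = n \<Longrightarrow> length y = n \<Longrightarrow>
       (f x y \<longrightarrow> measure_pmf.expectation R (h x y) \<ge> 2/3) \<and> (\<not> f x y \<longrightarrow> measure_pmf.expectation R (h x y) \<le> 1/3)"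
    and n: "n \<ge> 1" and m: "real m \<ge> 256 * n"
  shows "\<exists>\<omega>. \<forall>x y. length x = n \<longrightarrow> length y = n \<longrightarrow>
     (f x y \<longrightarrow> (\<Sum>i<m. h x y (\<omega> i)) / m \<ge> 7/12) \<and> (\<not> f x y \<longrightarrow> (\<Sum>i<m. h x y (\<omega> i)) / m \<le> 5/12)"
proof -
  have m0: "m > 0" using m n by (cases m) auto
  define M where "M = Pi_pmf {..<m} (0::nat) (\<lambda>_. R)"
  define L where "L = {xs :: bool list. length xs = n}"
  have L: "finite L" "card L = 2^n"
    using finite_lists_length_eq[of "UNIV :: bool set" n] card_lists_length_eq[of "UNIV :: bool set" n]
    by (simp_all add: L_def)
  define avg where "avg x y \<omega> = (\<Sum>i<m. h x y (\<omega> i)) / m" for x y \<omega>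
  define E where "E p = {\<omega>. if f (fst p) (snd p) then avg (fst p) (snd p) \<omega> < 7/12 else avg (fst p) (snd p) \<omega> > 5/12}" for p
  have PE: "measure_pmf.prob M (E p) \<le> exp (- real m / 72)" if "p \<in> L \<times> L" for p
  proof -
    obtain x y where p: "p = (x, y)" by (cases p)
    have xy: "length x = n" "length y = n" using that p by (auto simp: L_def)
    have eq: "exp (- 2 * real m * (1/12)\<^sup>2) = exp (- real m / 72)" by (simp add: power2_eq_square)
    show ?thesis
    proof (cases "f x y")
      case True
      then have "E p \<subseteq> {\<omega>. avg x y \<omega> \<le> measure_pmf.expectation R (h x y) - 1/12}"
        using corr[OF xy] by (auto simp: E_def p)
      then have "measure_pmf.prob M (E p) \<le> measure_pmf.prob M {\<omega>. avg x y \<omega> \<le> measure_pmf.expectation R (h x y) - 1/12}"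
        by (intro measure_pmf.finite_measure_mono) auto
      also have "\<dots> \<le> exp (- 2 * real m * (1/12)\<^sup>2)"
        using newman_single(1)[of "h x y" m "1/12" R, OF h01 m0] unfolding M_def avg_def by simp
      also have "\<dots> = exp (- real m / 72)" by (rule eq)
      finally show ?thesis .
    next
      case False
      then have "E p \<subseteq> {\<omega>. avg x y \<omega> \<ge> measure_pmf.expectation R (h x y) + 1/12}"
        using corr[OF xy] by (auto simp: E_def p)
      then have "measure_pmf.prob M (E p) \<le> measure_pmf.prob M {\<omega>. avg x y \<omega> \<ge> measure_pmf.expectation R (h x y) + 1/12}"
        by (intro measure_pmf.finite_measure_mono) auto
      also have "\<dots> \<le> exp (- 2 * real m * (1/12)\<^sup>2)"
        using newman_single(2)[of "h x y" m "1/12" R, OF h01 m0] unfolding M_def avg_def by simp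
      also have "\<dots> = exp (- real m / 72)" by (rule eq)
      finally show ?thesis .
    qed
  qed
  have "measure_pmf.prob M (\<Union>p\<in>L \<times> L. E p) \<le> (\<Sum>p\<in>L \<times> L. measure_pmf.prob M (E p))"
    by (rule measure_subadditive_finite) (use L in auto)
  also have "\<dots> \<le> (\<Sum>p\<in>L \<times> L. exp (- real m / 72))"
    by (rule sum_mono) (rule PE)
  also have "\<dots> = real (2^n * 2^n) * exp (- real m / 72)"
    using L by (simp add: card_cartesian_product)
  also have "\<dots> < 1" by (rule exp_bound_4n[OF n m])
  finally have lt: "measure_pmf.prob M (\<Union>p\<in>L \<times> L. E p) < 1" .
  have "\<exists>\<omega>. \<omega> \<notin> (\<Union>p\<in>L \<times> L. E p)"
  proof (rule ccontr)
    assume "\<not> ?thesis"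
    then have "(\<Union>p\<in>L \<times> L. E p) = UNIV" by auto
    then show False using lt by (simp add: measure_pmf.prob_space)
  qed
  then obtain \<omega> where \<omega>: "\<omega> \<notin> (\<Union>p\<in>L \<times> L. E p)" by blast
  show ?thesis
  proof (intro exI[of _ \<omega>] allI impI)
    fix x y :: "bool list" assume xy: "length x = n" "length y = n"
    then have "(x, y) \<in> L \<times> L" by (simp add: L_def)
    then have "\<omega> \<notin> E (x, y)" using \<omega> by blast
    then show "(f x y \<longrightarrow> (\<Sum>i<m. h x y (\<omega> i)) / m \<ge> 7/12) \<and> (\<not> f x y \<longrightarrow> (\<Sum>i<m. h x y (\<omega> i)) / m \<le> 5/12)"
      by (auto simp: E_def avg_def split: if_splits)
  qed
qed

lemma binom_yes:
  fixes k :: nat and p t \<delta> :: real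
  assumes k: "k > 0" and p: "p \<in> {0..1}" and t: "t \<le> k * p - k * \<delta>" and \<delta>: "\<delta> \<ge> 0"
    and e: "exp (- 2 * k * \<delta>\<^sup>2) \<le> 1/3"
  shows "measure_pmf.prob (binomial_pmf k p) {j. t \<le> real j} \<ge> 2/3"
proof -
  interpret binomial_distribution k p by unfold_locales (rule p)
  have "measure_pmf.prob (binomial_pmf k p) {j. real j \<le> k * p - k * \<delta>} \<le> exp (-2 * (k * \<delta>)\<^sup>2 / k)"
    using prob_le[OF k, of "k * \<delta>"] \<delta> by simp
  also have "exp (-2 * (k * \<delta>)\<^sup>2 / k) = exp (- 2 * k * \<delta>\<^sup>2)"
    using k by (simp add: power2_eq_square field_simps)
  finally have a: "measure_pmf.prob (binomial_pmf k p) {j. real j \<le> k * p - k * \<delta>} \<le> 1/3" using e by simp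
  have "{j. \<not> t \<le> real j} \<subseteq> {j. real j \<le> k * p - k * \<delta>}" using t by auto
  then have "measure_pmf.prob (binomial_pmf k p) {j. \<not> t \<le> real j} \<le> 1/3"
    using a measure_pmf.finite_measure_mono[of "{j. \<not> t \<le> real j}" "{j. real j \<le> k * p - k * \<delta>}" "binomial_pmf k p"]
    by simp
  moreover have "measure_pmf.prob (binomial_pmf k p) {j. \<not> t \<le> real j} = 1 - measure_pmf.prob (binomial_pmf k p) {j. t \<le> real j}"
  proof -
    have "UNIV - {j. t \<le> real j} = {j. \<not> t \<le> real j}" by auto
    then show ?thesis using measure_pmf.prob_compl[of "{j. t \<le> real j}" "binomial_pmf k p"] by simp
  qed
  ultimately show ?thesis by simp
qed

lemma binom_no:
  fixes k :: nat and p t \<delta> :: real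
  assumes k: "k > 0" and p: "p \<in> {0..1}" and t: "t \<ge> k * p + k * \<delta>" and \<delta>: "\<delta> \<ge> 0"
    and e: "exp (- 2 * k * \<delta>\<^sup>2) \<le> 1/3"
  shows "measure_pmf.prob (binomial_pmf k p) {j. t \<le> real j} \<le> 1/3"
proof -
  interpret binomial_distribution k p by unfold_locales (rule p)
  have "measure_pmf.prob (binomial_pmf k p) {j. real j \<ge> k * p + k * \<delta>} \<le> exp (-2 * (k * \<delta>)\<^sup>2 / k)"
    using prob_ge[OF k, of "k * \<delta>"] \<delta> by simp
  also have "exp (-2 * (k * \<delta>)\<^sup>2 / k) = exp (- 2 * k * \<delta>\<^sup>2)"
    using k by (simp add: power2_eq_square field_simps)
  finally have a: "measure_pmf.prob (binomial_pmf k p) {j. real j \<ge> k * p + k * \<delta>} \<le> 1/3" using e by simp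
  have "{j. t \<le> real j} \<subseteq> {j. real j \<ge> k * p + k * \<delta>}" using t by auto
  then show ?thesis
    using a measure_pmf.finite_measure_mono[of "{j. t \<le> real j}" "{j. real j \<ge> k * p + k * \<delta>}" "binomial_pmf k p"]
    by simp
qed

lemma classical_exists:
  "\<exists>ca cb R A B g. ca + cb = R_smp_pub n f \<and> pub_smp_protocol n f ca cb R A B g"
proof -
  have "pub_smp_protocol n f n n (return_pmf 0) (\<lambda>x r. x) (\<lambda>y r. y) (\<lambda>a b. return_pmf (f a b))"
    unfolding pub_smp_protocol_def by (simp add: measure_return)
  then have "\<exists>ca cb R A B g. ca + cb = n + n \<and> pub_smp_protocol n f ca cb R A B g" by blast
  then have "\<exists>c. \<exists>ca cb R A B g. ca + cb = c \<and> pub_smp_protocol n f ca cb R A B g" by blast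
  then show ?thesis unfolding R_smp_pub_def by (rule LeastI_ex)
qed

lemma pub_correct:
  assumes P: "pub_smp_protocol n f ca cb R A B g" and xy: "length x = n" "length y = n"
  shows "(f x y \<longrightarrow> measure_pmf.expectation R (\<lambda>r. pmf (g (A x r) (B y r)) True) \<ge> 2/3)
       \<and> (\<not> f x y \<longrightarrow> measure_pmf.expectation R (\<lambda>r. pmf (g (A x r) (B y r)) True) \<le> 1/3)"
proof -
  have c: "measure_pmf.prob (bind_pmf R (\<lambda>r. g (A x r) (B y r))) {f x y} \<ge> 2/3"
    using P xy unfolding pub_smp_protocol_def by blast
  have pb: "measure_pmf.prob (bind_pmf R (\<lambda>r. g (A x r) (B y r))) {b} = measure_pmf.expectation R (\<lambda>r. pmf (g (A x r) (B y r)) b)" for b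
    by (simp add: measure_pmf_single pmf_bind)
  have int: "integrable (measure_pmf R) (\<lambda>r. pmf (g (A x r) (B y r)) True)"
    by (rule measure_pmf.integrable_const_bound[where B=1]) (auto simp: pmf_le_1)
  have "measure_pmf.expectation R (\<lambda>r. pmf (g (A x r) (B y r)) False) = 1 - measure_pmf.expectation R (\<lambda>r. pmf (g (A x r) (B y r)) True)"
    by (simp add: pmf_False_conv_True Bochner_Integration.integral_diff[OF _ int] measure_pmf.prob_space)
  then show ?thesis using c pb[of True] pb[of False] by (cases "f x y") auto
qed

lemma decide:
  fixes lm :: nat and P :: real
  assumes P01: "0 \<le> P" "P \<le> 1"
  defines "L \<equiv> (2::real)^lm" and "k \<equiv> (2::nat)^(2*lm+10)"
  defines "t \<equiv> real k * (1/2 + 37 / (288 * L))"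
  shows "P \<ge> 7/12 \<Longrightarrow> measure_pmf.prob (binomial_pmf k ((1 + (P * (1 / sqrt L))\<^sup>2) / 2)) {j. t \<le> real j} \<ge> 2/3"
    and "P \<le> 5/12 \<Longrightarrow> measure_pmf.prob (binomial_pmf k ((1 + (P * (1 / sqrt L))\<^sup>2) / 2)) {j. t \<le> real j} \<le> 1/3"
proof -
  have L1: "L \<ge> 1" by (simp add: L_def)
  have k: "k > 0" by (simp add: k_def)
  have kk: "(2::nat)^(2*lm+10) = (2^lm)^2 * 1024" by (simp add: power_add mult.commute[of 2 lm] power_mult)
  have kL: "real k = 1024 * L\<^sup>2"
    unfolding k_def L_def kk by simp
  define s where "s = (P * (1 / sqrt L))\<^sup>2"
  have s: "s = P\<^sup>2 / L" using L1 by (simp add: s_def power_mult_distrib power_divide)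
  have s01: "0 \<le> s" "s \<le> 1"
  proof -
    show "0 \<le> s" by (simp add: s_def)
    have "P\<^sup>2 \<le> 1" using P01 by (simp add: power_le_one)
    then show "s \<le> 1" using L1 unfolding s by (simp add: divide_le_eq)
  qed
  define p where "p = (1 + s) / 2"
  have p: "p \<in> {0..1}" using s01 by (simp add: p_def)
  define \<delta> where "\<delta> = 1 / (24 * L)"
  have \<delta>: "\<delta> \<ge> 0" using L1 by (simp add: \<delta>_def)
  have e: "exp (- 2 * k * \<delta>\<^sup>2) \<le> 1/3"
  proof -
    have h1: "- 2 * real k * \<delta>\<^sup>2 = - (32/9)" using L1 by (simp add: kL \<delta>_def power2_eq_square field_simps)
    have h3: "exp (32/9::real) \<ge> 3" using exp_ge_add_one_self[of "32/9::real"] by simp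
    have "exp (- 2 * real k * \<delta>\<^sup>2) = inverse (exp (32/9))" unfolding h1 by (rule exp_minus)
    also have "\<dots> \<le> inverse 3" using h3 by (intro le_imp_inverse_le) auto
    finally show ?thesis by simp
  qed
  show "measure_pmf.prob (binomial_pmf k ((1 + (P * (1 / sqrt L))\<^sup>2) / 2)) {j. t \<le> real j} \<ge> 2/3" if "P \<ge> 7/12"
  proof -
    have "P\<^sup>2 \<ge> (7/12)\<^sup>2" using that by (intro power_mono) auto
    then have "s \<ge> 49 / (144 * L)" using L1 unfolding s by (simp add: field_simps power2_eq_square)
    then have "t \<le> k * p - k * \<delta>"
      using L1 k unfolding t_def p_def \<delta>_def by (simp add: field_simps)
    then show ?thesis using binom_yes[OF k p _ \<delta> e] by (simp add: p_def s_def)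
  qed
  show "measure_pmf.prob (binomial_pmf k ((1 + (P * (1 / sqrt L))\<^sup>2) / 2)) {j. t \<le> real j} \<le> 1/3" if "P \<le> 5/12"
  proof -
    have "P\<^sup>2 \<le> (5/12)\<^sup>2" using that P01 by (intro power_mono) auto
    then have "s \<le> 25 / (144 * L)" using L1 unfolding s by (simp add: field_simps power2_eq_square)
    then have "t \<ge> k * p + k * \<delta>"
      using L1 k unfolding t_def p_def \<delta>_def by (simp add: field_simps)
    then show ?thesis using binom_no[OF k p _ \<delta> e] by (simp add: p_def s_def)
  qed
qed

lemma caseB:
  assumes P: "pub_smp_protocol n f ca cb R A B g" and n2: "n \<ge> 2" and small: "2^(ca+cb) < n"
  shows "real (Q_smp n f) \<le> 24576 * 2^(ca+cb) * log 2 n"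
proof -
  define pg where "pg a b = pmf (g a b) True" for a b
  have pg01: "0 \<le> pg a b \<and> pg a b \<le> 1" for a b by (simp add: pg_def pmf_le_1)
  define lm where "lm = min ca cb"
  define L :: real where "L = 2^lm"
  define j0 where "j0 = nat \<lceil>log 2 n\<rceil>"
  define em where "em = j0 + 8"
  define m :: nat where "m = 2^em"
  have logn: "log 2 n \<ge> 1" using n2 by simp
  have nj0: "real n \<le> 2^j0"
  proof -
    have "log 2 n \<le> real j0" unfolding j0_def using logn by linarith
    then have "2 powr (log 2 n) \<le> 2 powr (real j0)" by simp
    then show ?thesis using n2 by (simp add: powr_realpow)
  qed
  have j0le: "real j0 \<le> log 2 n + 1" unfolding j0_def using logn by linarith
  have m256: "real m \<ge> 256 * real n"
  proof -
    have "real m = 2^j0 * 256" by (simp add: m_def em_def power_add)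
    then show ?thesis using nj0 by simp
  qed
  have m0: "m > 0" by (simp add: m_def)
  have lA: "length (A x r) = ca" if "length x = n" for x r using P that unfolding pub_smp_protocol_def by blast
  have lB: "length (B y r) = cb" if "length y = n" for y r using P that unfolding pub_smp_protocol_def by blast
  obtain \<omega> where \<omega>: "\<forall>x y. length x = n \<longrightarrow> length y = n \<longrightarrow>
     (f x y \<longrightarrow> (\<Sum>i<m. pg (A x (\<omega> i)) (B y (\<omega> i))) / m \<ge> 7/12) \<and> (\<not> f x y \<longrightarrow> (\<Sum>i<m. pg (A x (\<omega> i)) (B y (\<omega> i))) / m \<le> 5/12)"
    using newman[of "\<lambda>x y r. pg (A x r) (B y r)" n f R m] pg01 pub_correct[OF P] m256 n2
    unfolding pg_def by auto
  obtain u w where uw: "\<forall>a. length a = ca \<longrightarrow> (\<Sum>j<2^(lm+1). (u a j)\<^sup>2) = 1" "\<forall>b. length b = cb \<longrightarrow> (\<Sum>j<2^(lm+1). (w b j)\<^sup>2) = 1"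
     "\<forall>a b. length a = ca \<longrightarrow> length b = cb \<longrightarrow> (\<Sum>j<(2::nat)^(lm+1). u a j * w b j) = pg a b / sqrt (2^lm)"
    using fact_min[of pg ca cb] pg01 unfolding lm_def by blast
  define D0 :: nat where "D0 = 2^(lm+1)"
  define \<kappa> :: real where "\<kappa> = 1 / sqrt L"
  define \<psi> where "\<psi> = (\<lambda>x j. u (A x (\<omega> (j div D0))) (j mod D0) / sqrt m)"
  define \<phi> where "\<phi> = (\<lambda>y j. w (B y (\<omega> (j div D0))) (j mod D0) / sqrt m)"
  have uw3: "(\<Sum>j<D0. u a j * w b j) = pg a b * \<kappa>" if "length a = ca" "length b = cb" for a b
    using uw(3) that by (simp add: D0_def \<kappa>_def L_def)
  note pc = percopy[where u=u and w=w and G=pg and \<kappa>=\<kappa> and A=A and B=B and \<omega>=\<omega> and ?D0.0=D0 and m=m and n=n and ca=ca and cb=cb,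
     OF _ _ uw3 lA lB _ m0]
  define e where "e = em + lm + 1"
  have eD: "(2::nat)^e = m * D0" by (simp add: e_def m_def D0_def power_add)
  define k :: nat where "k = 2^(2*lm+10)"
  define t where "t = real k * (1/2 + 37 / (288 * L))"
  have "Q_smp n f \<le> e * k + e * k"
  proof (rule amp_protocol[where \<psi>=\<psi> and \<phi>=\<phi> and t=t])
    show "(\<Sum>a<2^e. (\<psi> x a)\<^sup>2) = 1" if "length x = n" for x
      unfolding eD \<psi>_def by (rule pc(1)) (use uw that in \<open>simp_all add: D0_def\<close>)
    show "(\<Sum>a<2^e. (\<phi> y a)\<^sup>2) = 1" if "length y = n" for y
      unfolding eD \<phi>_def by (rule pc(2)) (use uw that in \<open>simp_all add: D0_def\<close>)
    fix x y :: "bool list" assume xy: "length x = n" "length y = n"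
    define Ph where "Ph = (\<Sum>i<m. pg (A x (\<omega> i)) (B y (\<omega> i))) / m"
    have inner: "(\<Sum>a<2^e. \<psi> x a * \<phi> y a) = Ph * (1 / sqrt L)"
      unfolding eD Ph_def \<kappa>_def[symmetric] \<psi>_def \<phi>_def by (rule pc(3)) (use uw xy in \<open>simp_all add: D0_def\<close>)
    have Ph01: "0 \<le> Ph" "Ph \<le> 1"
    proof -
      show "0 \<le> Ph" unfolding Ph_def using pg01 by (intro divide_nonneg_nonneg sum_nonneg) auto
      have "(\<Sum>i<m. pg (A x (\<omega> i)) (B y (\<omega> i))) \<le> (\<Sum>i<m. 1)" using pg01 by (intro sum_mono) auto
      then show "Ph \<le> 1" unfolding Ph_def using m0 by simp
    qed
    show "let p = measure_pmf.prob (binomial_pmf k ((1 + (\<Sum>a<2^e. \<psi> x a * \<phi> y a)\<^sup>2) / 2)) {j. t \<le> real j}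
       in (if f x y then p else 1 - p) \<ge> 2/3"
    proof (cases "f x y")
      case True
      then have "Ph \<ge> 7/12" using \<omega> xy unfolding Ph_def by blast
      then show ?thesis using decide(1)[OF Ph01, of lm] True unfolding inner Let_def k_def t_def L_def by simp
    next
      case False
      then have "Ph \<le> 5/12" using \<omega> xy unfolding Ph_def by blast
      then show ?thesis using decide(2)[OF Ph01, of lm] False unfolding inner Let_def k_def t_def L_def by simp
    qed
  qed
  then have "real (Q_smp n f) \<le> real (e * k + e * k)" by (simp only: of_nat_le_iff)
  also have "\<dots> = 2 * real e * real k" by simp
  finally have Q: "real (Q_smp n f) \<le> 2 * real e * real k" .
  have lmlog: "real lm < log 2 n"
  proof -
    have "(2::nat)^lm \<le> 2^(ca+cb)" unfolding lm_def by (intro power_increasing) auto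
    then have "2^lm < n" using small by (rule le_less_trans)
    then show ?thesis by (rule less_log2_of_power)
  qed
  have e12: "real e \<le> 12 * log 2 n"
    using j0le lmlog logn unfolding e_def em_def by simp
  have kc: "real k \<le> 1024 * 2^(ca+cb)"
  proof -
    have "2 * lm \<le> ca + cb" unfolding lm_def by simp
    then have "(2::nat)^(2*lm+10) \<le> 2^(ca+cb+10)" by (intro power_increasing) auto
    then have "k \<le> 1024 * 2^(ca+cb)" by (simp add: k_def power_add)
    then show ?thesis by (metis of_nat_le_iff of_nat_mult of_nat_numeral of_nat_power)
  qed
  have "2 * real e * real k \<le> 2 * (12 * log 2 n) * (1024 * 2^(ca+cb))"
    using e12 kc by (intro mult_mono) auto
  also have "\<dots> = 24576 * 2^(ca+cb) * log 2 n" by simp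
  finally show ?thesis using Q by linarith
qed

theorem mainTheorem3:
  "\<exists>C::real. C > 0 \<and>
     (\<forall>n::nat. \<forall>f :: bool list \<Rightarrow> bool list \<Rightarrow> bool. n \<ge> 2 \<longrightarrow>
        real (Q_smp n f) \<le> C * 2 ^ R_smp_pub n f * log 2 (real n))"
proof (intro exI[of _ 24576] conjI allI impI)
  fix n :: nat and f :: "bool list \<Rightarrow> bool list \<Rightarrow> bool"
  assume n2: "n \<ge> 2"
  obtain ca cb R A B g where c: "ca + cb = R_smp_pub n f" and P: "pub_smp_protocol n f ca cb R A B g"
    using classical_exists[of n f] by blast
  have logn: "log 2 n \<ge> 1" using n2 by simp
  show "real (Q_smp n f) \<le> 24576 * 2 ^ R_smp_pub n f * log 2 (real n)"
  proof (cases "2^(ca+cb) < n")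
    case True
    then show ?thesis using caseB[OF P n2 True] c by simp
  next
    case False
    then have "real n \<le> 2^(ca+cb)" by (metis not_less of_nat_le_iff of_nat_numeral of_nat_power)
    have "real (Q_smp n f) \<le> real (n + n)" using trivial_protocol[of n f] by (simp only: of_nat_le_iff)
    also have "\<dots> \<le> 2 * 2^(ca+cb)" using \<open>real n \<le> 2^(ca+cb)\<close> by simp
    also have "\<dots> \<le> 24576 * 2^(ca+cb) * 1" by simp
    also have "\<dots> \<le> 24576 * 2^(ca+cb) * log 2 n" using logn by (intro mult_left_mono) auto
    finally show ?thesis using c by simp
  qed
qed simp

end
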